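(* For all $\mu,\nu\in\mathcal{S}\mathrm{Curr}(F_N)$, the set function $U\mapsto(\mu\times\nu)(I^{-1}(U))$ on Borel subsets $U\subset\mathcal{C}_N$ is well defined and is a subset current; moreover for every $T\in\mathrm{Sub}(X,1)$ it satisfies $(\mu\times\nu)(I^{-1}(\mathrm{SCyl}(T)))\leq V(\mu)V(\nu)$, where $V(\mu)=\sum_{T'\in\mathcal{R}_1}\mu(\mathrm{SCyl}(T'))$. The resulting map $\widehat I\colon\mathcal{S}\mathrm{Curr}(F_N)^2\to\mathcal{S}\mathrm{Curr}(F_N)$ is $\mathbb{R}_{\geq0}$-bilinear.
   Context: $N\geq2$, $F_N$ free with free basis $A$, $X$ its Cayley graph (tree with vertex set $F_N$, edge lengths 1, path metric $d_X$), $\partial X$ its boundary. $\mathcal{C}_N$: closed subsets of $\partial X$ with at least two points, Vietoris (Hausdorff) topology; a subset current is an $F_N$-invariant Borel measure on $\mathcal{C}_N$ finite on compact sets. $I(S_1,S_2)=S_1\cap S_2\in\{\text{closed subsets of }\partial X\}$. For an oriented edge $e$ of $X$, $\mathrm{Cyl}(e)\subset\partial X$ is the set of ends of geodesic rays starting with $e$. $\mathrm{Sub}(X)$ is the set of finite subtrees of $X$ with at least two vertices; for $T\in\mathrm{Sub}(X)$ with terminal edges $e_1,\dots,e_m$ (oriented edges whose terminal vertex has degree one in $T$), $\mathrm{SCyl}(T)=\{S\in\mathcal{C}_N: S\subset\bigcup_i\mathrm{Cyl}(e_i),\ S\cap\mathrm{Cyl}(e_i)\neq\emptyset\ \forall i\}$.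 $\mathrm{Sub}(X,1)$ is the set of $T\in\mathrm{Sub}(X)$ containing $1$. $\mathcal{R}_1$ is the set of $T\in\mathrm{Sub}(X)$ containing $1$ such that $1$ has degree $\ge2$ in $T$ and every degree-one vertex $u$ of $T$ satisfies $d_X(1,u)=1$. *)

theory Defs
  imports "HOL-Analysis.Analysis" "HOL-Probability.Probability"
begin

text \<open>Letters of the free basis A = {1..N} and their inverses are encoded as
nonzero integers a with |a| \<le> N; the inverse of a is -a.  Elements of F_N are
freely reduced words (lists of letters); 1 is the empty word.\<close>

definition letters :: "nat \<Rightarrow> int set" where
  "letters N = {a. a \<noteq> 0 \<and> \<bar>a\<bar> \<le> int N}"

definition reduced :: "int list \<Rightarrow> bool" where
  "reduced xs \<longleftrightarrow> (\<forall>i. Suc i < length xs \<longrightarrow> xs ! Suc i \<noteq> - (xs ! i))"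

definition FN :: "nat \<Rightarrow> int list set" where
  "FN N = {xs. set xs \<subseteq> letters N \<and> reduced xs}"

definition cons_red :: "int \<Rightarrow> int list \<Rightarrow> int list" where
  "cons_red a xs = (case xs of [] \<Rightarrow> [a] | b # ys \<Rightarrow> (if b = - a then ys else a # xs))"

definition mult :: "int list \<Rightarrow> int list \<Rightarrow> int list" where
  "mult g h = foldr cons_red g h"

definition inv_w :: "int list \<Rightarrow> int list" where
  "inv_w g = rev (map uminus g)"

definition adj :: "nat \<Rightarrow> int list \<Rightarrow> int list \<Rightarrow> bool" where
  "adj N u v \<longleftrightarrow> u \<in> FN N \<and> (\<exists>a\<in>letters N. v = mult u [a])"

definition dX :: "int list \<Rightarrow> int list \<Rightarrow> nat" where
  "dX u v = length (mult (inv_w u) v)"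

text \<open>Ends of X are identified with ends of geodesic rays from 1, i.e. infinite
reduced words, with the (product = cylinder) topology.\<close>
definition bdry :: "nat \<Rightarrow> (nat \<Rightarrow> int) set" where
  "bdry N = {x. \<forall>n. x n \<in> letters N \<and> x (Suc n) \<noteq> - x n}"

definition cons_red_inf :: "int \<Rightarrow> (nat \<Rightarrow> int) \<Rightarrow> (nat \<Rightarrow> int)" where
  "cons_red_inf a x = (if x 0 = - a then (\<lambda>n. x (Suc n))
                       else (\<lambda>n. if n = 0 then a else x (n - 1)))"

definition act_bdry :: "int list \<Rightarrow> (nat \<Rightarrow> int) \<Rightarrow> (nat \<Rightarrow> int)" where
  "act_bdry g x = foldr cons_red_inf g x"

definition bdry_top :: "nat \<Rightarrow> (nat \<Rightarrow> int) topology" where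
  "bdry_top N = top_of_set (bdry N)"

text \<open>Cyl(e) for the oriented edge e = (u,v): ends of geodesic rays starting
with e, i.e. boundary points whose ray from u passes first through v.\<close>
definition Cyl :: "nat \<Rightarrow> int list \<times> int list \<Rightarrow> (nat \<Rightarrow> int) set" where
  "Cyl N e = {\<xi> \<in> bdry N. [act_bdry (inv_w (fst e)) \<xi> 0] = mult (inv_w (fst e)) (snd e)}"

definition CN :: "nat \<Rightarrow> (nat \<Rightarrow> int) set set" where
  "CN N = {S. S \<subseteq> bdry N \<and> closedin (bdry_top N) S \<and> (\<exists>x\<in>S. \<exists>y\<in>S. x \<noteq> y)}"

definition Vietoris :: "nat \<Rightarrow> (nat \<Rightarrow> int) set topology" where
  "Vietoris N = topology_generated_by
     ({{S \<in> CN N. S \<subseteq> U} | U. openin (bdry_top N) U}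
      \<union> {{S \<in> CN N. S \<inter> U \<noteq> {}} | U. openin (bdry_top N) U})"

definition borel_CN :: "nat \<Rightarrow> (nat \<Rightarrow> int) set measure" where
  "borel_CN N = sigma (CN N) {U. openin (Vietoris N) U}"

definition act_set :: "int list \<Rightarrow> (nat \<Rightarrow> int) set set \<Rightarrow> (nat \<Rightarrow> int) set set" where
  "act_set g U = (\<lambda>S. act_bdry g ` S) ` U"

definition is_SCurr :: "nat \<Rightarrow> (nat \<Rightarrow> int) set measure \<Rightarrow> bool" where
  "is_SCurr N \<mu> \<longleftrightarrow> sets \<mu> = sets (borel_CN N)
     \<and> (\<forall>g\<in>FN N. \<forall>U\<in>sets (borel_CN N). emeasure \<mu> (act_set g U) = emeasure \<mu> U)
     \<and> (\<forall>K. compactin (Vietoris N) K \<longrightarrow> emeasure \<mu> K < \<infinity>)"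

definition edges_in :: "nat \<Rightarrow> int list set \<Rightarrow> (int list \<times> int list) set" where
  "edges_in N T = {(u, v). u \<in> T \<and> v \<in> T \<and> adj N u v}"

text \<open>A finite subtree with at least two vertices, given by its vertex set
(a connected set of vertices of the tree X spans a unique subtree).\<close>
definition Sub :: "nat \<Rightarrow> int list set set" where
  "Sub N = {T. finite T \<and> T \<subseteq> FN N \<and> 2 \<le> card T
              \<and> (\<forall>u\<in>T. \<forall>v\<in>T. (u, v) \<in> (edges_in N T)\<^sup>*)}"

definition deg :: "nat \<Rightarrow> int list set \<Rightarrow> int list \<Rightarrow> nat" where
  "deg N T v = card {u \<in> T. adj N v u}"

definition terminal_edges :: "nat \<Rightarrow> int list set \<Rightarrow> (int list \<times> int list) set" where
  "terminal_edges N T = {(u, v) \<in> edges_in N T. deg N T v = 1}"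

definition SCyl :: "nat \<Rightarrow> int list set \<Rightarrow> (nat \<Rightarrow> int) set set" where
  "SCyl N T = {S \<in> CN N. S \<subseteq> (\<Union>e\<in>terminal_edges N T. Cyl N e)
                 \<and> (\<forall>e\<in>terminal_edges N T. S \<inter> Cyl N e \<noteq> {})}"

definition Sub1 :: "nat \<Rightarrow> int list set set" where
  "Sub1 N = {T \<in> Sub N. [] \<in> T}"

definition R1 :: "nat \<Rightarrow> int list set set" where
  "R1 N = {T \<in> Sub N. [] \<in> T \<and> 2 \<le> deg N T []
             \<and> (\<forall>u\<in>T. deg N T u = 1 \<longrightarrow> dX [] u = 1)}"

definition V :: "nat \<Rightarrow> (nat \<Rightarrow> int) set measure \<Rightarrow> ennreal" where
  "V N \<mu> = (\<Sum>T\<in>R1 N. emeasure \<mu> (SCyl N T))"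

definition Ipre :: "nat \<Rightarrow> (nat \<Rightarrow> int) set set \<Rightarrow> ((nat \<Rightarrow> int) set \<times> (nat \<Rightarrow> int) set) set" where
  "Ipre N U = {p \<in> CN N \<times> CN N. fst p \<inter> snd p \<in> U}"

definition Ihat :: "nat \<Rightarrow> (nat \<Rightarrow> int) set measure \<Rightarrow> (nat \<Rightarrow> int) set measure
                     \<Rightarrow> (nat \<Rightarrow> int) set measure" where
  "Ihat N \<mu> \<nu> = measure_of (CN N) (sets (borel_CN N)) (\<lambda>U. emeasure (\<mu> \<Otimes>\<^sub>M \<nu>) (Ipre N U))"

end

theory Submission
  imports Defs
begin


lemma letters_uminus[simp]: "- a \<in> letters N \<longleftrightarrow> a \<in> letters N"
  by (auto simp: letters_def)

lemma letters_nz: "a \<in> letters N \<Longrightarrow> a \<noteq> 0"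
  by (auto simp: letters_def)

lemma finite_letters: "finite (letters N)"
proof -
  have "letters N \<subseteq> {- int N..int N}" by (auto simp: letters_def)
  then show ?thesis by (rule finite_subset) simp
qed

lemma bdryD: "x \<in> bdry N \<Longrightarrow> x n \<in> letters N" "x \<in> bdry N \<Longrightarrow> x (Suc n) \<noteq> - x n"
  by (auto simp: bdry_def)

lemma cri_bdry: "a \<in> letters N \<Longrightarrow> x \<in> bdry N \<Longrightarrow> cons_red_inf a x \<in> bdry N"
proof -
  assume a: "a \<in> letters N" and x: "x \<in> bdry N"
  show ?thesis
  proof (cases "x 0 = - a")
    case True
    then show ?thesis using x unfolding cons_red_inf_def bdry_def by simp
  next
    case False
    have "(\<lambda>n. if n = 0 then a else x (n - 1)) \<in> bdry N"
      unfolding bdry_def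
    proof (intro CollectI allI conjI)
      fix n
      show "(if n = 0 then a else x (n - 1)) \<in> letters N" using a bdryD(1)[OF x] by simp
      show "(if Suc n = 0 then a else x (Suc n - 1)) \<noteq> - (if n = 0 then a else x (n - 1))"
      proof (cases n)
        case 0 then show ?thesis using False by auto
      next
        case (Suc k) then show ?thesis using bdryD(2)[OF x, of k] by simp
      qed
    qed
    then show ?thesis using False unfolding cons_red_inf_def by simp
  qed
qed

lemma cri_inv: "x \<in> bdry N \<Longrightarrow> cons_red_inf (- a) (cons_red_inf a x) = x"
proof -
  assume x: "x \<in> bdry N"
  show ?thesis
  proof (cases "x 0 = - a")
    case True
    have "x (Suc 0) \<noteq> a" using bdryD(2)[OF x, of 0] True by auto
    show ?thesis
    proof (rule ext)
      fix n show "cons_red_inf (- a) (cons_red_inf a x) n = x n"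
        using True \<open>x (Suc 0) \<noteq> a\<close> unfolding cons_red_inf_def
        by (cases n) auto
    qed
  next
    case False
    then show ?thesis unfolding cons_red_inf_def by (auto intro!: ext)
  qed
qed

lemma act_bdry_Nil[simp]: "act_bdry [] x = x"
  by (simp add: act_bdry_def)

lemma act_bdry_Cons[simp]: "act_bdry (a # g) x = cons_red_inf a (act_bdry g x)"
  by (simp add: act_bdry_def)

lemma act_bdry_append: "act_bdry (p @ q) x = act_bdry p (act_bdry q x)"
  by (simp add: act_bdry_def)

lemma act_bdry_in: "set g \<subseteq> letters N \<Longrightarrow> x \<in> bdry N \<Longrightarrow> act_bdry g x \<in> bdry N"
  by (induction g) (auto intro: cri_bdry)

lemma inv_w_Cons: "inv_w (a # g) = inv_w g @ [- a]"
  by (simp add: inv_w_def)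

lemma inv_w_inv_w[simp]: "inv_w (inv_w g) = g"
  by (simp add: inv_w_def rev_map)

lemma set_inv_w: "set g \<subseteq> letters N \<Longrightarrow> set (inv_w g) \<subseteq> letters N"
  by (auto simp: inv_w_def)

lemma act_inv1: "set g \<subseteq> letters N \<Longrightarrow> x \<in> bdry N \<Longrightarrow> act_bdry (inv_w g) (act_bdry g x) = x"
proof (induction g)
  case Nil then show ?case by (simp add: inv_w_def)
next
  case (Cons a g)
  have "act_bdry g x \<in> bdry N" using Cons by (intro act_bdry_in) auto
  then show ?case using Cons
    by (simp add: inv_w_Cons act_bdry_append cri_inv)
qed

lemma act_inv2: "set g \<subseteq> letters N \<Longrightarrow> x \<in> bdry N \<Longrightarrow> act_bdry g (act_bdry (inv_w g) x) = x"
  using act_inv1[of "inv_w g" N x] set_inv_w[of g N] by simp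

definition agree :: "(nat \<Rightarrow> int) \<Rightarrow> (nat \<Rightarrow> int) \<Rightarrow> nat \<Rightarrow> bool" where
  "agree x y m \<longleftrightarrow> (\<forall>i<m. x i = y i)"

lemma cri_agree: "agree x y (Suc m) \<Longrightarrow> agree (cons_red_inf a x) (cons_red_inf a y) m"
  unfolding agree_def cons_red_inf_def by auto

lemma act_agree: "agree x y (m + length g) \<Longrightarrow> agree (act_bdry g x) (act_bdry g y) m"
proof (induction g arbitrary: m)
  case Nil then show ?case by simp
next
  case (Cons a g)
  then have "agree (act_bdry g x) (act_bdry g y) (Suc m)" by simp
  then show ?case by (simp add: cri_agree)
qed




definition cylx :: "(nat \<Rightarrow> int) \<Rightarrow> nat \<Rightarrow> (nat \<Rightarrow> int) set" where
  "cylx x m = {y. \<forall>i<m. y i = x i}"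

lemma open_cylx: "open (cylx x m)"
proof -
  have "open {f::nat\<Rightarrow>int. \<forall>i\<in>{..<m}. f (id i) \<in> {x i}}"
    by (rule product_topology_basis') (auto intro: discrete_topology_class.open_discrete)
  moreover have "{f::nat\<Rightarrow>int. \<forall>i\<in>{..<m}. f (id i) \<in> {x i}} = cylx x m"
    by (auto simp: cylx_def)
  ultimately show ?thesis by simp
qed

lemma closed_int: "closed (A :: int set)"
  unfolding closed_def by (rule discrete_topology_class.open_discrete)

lemma closed_coord: "closed {y::nat\<Rightarrow>int. y i \<in> A}"
proof -
  have "closed ((\<lambda>y::nat\<Rightarrow>int. y i) -` A)"
    by (rule closed_vimage[OF closed_int]) simp
  then show ?thesis by (simp add: vimage_def)
qed

lemma closed_cylx: "closed (cylx x m)"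
proof -
  have "cylx x m = (\<Inter>i\<in>{..<m}. {y. y i \<in> {x i}})" by (auto simp: cylx_def)
  then show ?thesis by (auto intro!: closed_INT closed_coord[of _ "{_}", simplified])
qed

lemma cylx_self[simp]: "x \<in> cylx x m"
  by (simp add: cylx_def)

lemma cylx_mono: "m \<le> n \<Longrightarrow> cylx x n \<subseteq> cylx x m"
  by (auto simp: cylx_def)

lemma cylx_sym: "y \<in> cylx x m \<longleftrightarrow> x \<in> cylx y m"
  by (auto simp: cylx_def)

lemma cylx_trans: "y \<in> cylx x m \<Longrightarrow> cylx y m = cylx x m"
  by (auto simp: cylx_def)

lemma open_cyl_nbhd:
  assumes "open U" "x \<in> U" shows "\<exists>m. cylx x m \<subseteq> U"
proof -
  have "openin (product_topology (\<lambda>i. euclidean) UNIV) U"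
    using assms(1) by (simp add: open_fun_def)
  from product_topology_open_contains_basis[OF this assms(2)]
  obtain X where X: "x \<in> (\<Pi>\<^sub>E i\<in>UNIV. X i)" "finite {i. X i \<noteq> topspace euclidean}"
     "(\<Pi>\<^sub>E i\<in>UNIV. X i) \<subseteq> U" by blast
  from X(2) obtain m where m: "{i. X i \<noteq> UNIV} \<subseteq> {..<m}"
    using finite_nat_bounded by auto
  have "cylx x m \<subseteq> (\<Pi>\<^sub>E i\<in>UNIV. X i)"
  proof
    fix y assume y: "y \<in> cylx x m"
    have "y i \<in> X i" for i
    proof (cases "X i = UNIV")
      case False
      then have "i < m" using m by blast
      then have "y i = x i" using y by (auto simp: cylx_def)
      then show ?thesis using X(1) by auto
    qed simp
    then show "y \<in> (\<Pi>\<^sub>E i\<in>UNIV. X i)" by auto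
  qed
  then show ?thesis using X(3) by blast
qed

lemma agree_cylx: "agree x y m \<longleftrightarrow> x \<in> cylx y m"
  by (simp add: agree_def cylx_def)

lemma closed_bdry: "closed (bdry N)"
proof -
  have "bdry N = (\<Inter>n. {y. y n \<in> letters N}) \<inter> (\<Inter>n. \<Inter>a. {y. y n \<in> -{a}} \<union> {y. y (Suc n) \<in> -{-a}})"
    by (auto simp: bdry_def)
  then show ?thesis by (auto intro!: closed_Int closed_INT closed_Un closed_coord closed_coord[of _ "-{_}", simplified])
qed

lemma compact_bdry: "compact (bdry N)"
proof -
  have "compactin (product_topology (\<lambda>i. euclidean) UNIV) (PiE UNIV (\<lambda>i. letters N))"
    by (subst compactin_PiE) (auto intro: finite_imp_compact finite_letters)
  then have "compact (PiE UNIV (\<lambda>i::nat. letters N))"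
    by (simp add: euclidean_product_topology)
  moreover have "bdry N = PiE UNIV (\<lambda>i::nat. letters N) \<inter> bdry N"
    by (auto simp: bdry_def)
  ultimately show ?thesis using closed_bdry by (metis compact_Int_closed)
qed

lemma openin_bdry_iff: "openin (bdry_top N) U \<longleftrightarrow> U \<subseteq> bdry N \<and> (\<forall>x\<in>U. \<exists>m. cylx x m \<inter> bdry N \<subseteq> U)"
proof
  assume "openin (bdry_top N) U"
  then obtain W where O: "open W" "U = W \<inter> bdry N"
    by (auto simp: bdry_top_def openin_open)
  show "U \<subseteq> bdry N \<and> (\<forall>x\<in>U. \<exists>m. cylx x m \<inter> bdry N \<subseteq> U)"
    using O open_cyl_nbhd[OF O(1)] by blast
next
  assume H: "U \<subseteq> bdry N \<and> (\<forall>x\<in>U. \<exists>m. cylx x m \<inter> bdry N \<subseteq> U)"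
  then obtain m where m: "\<And>x. x \<in> U \<Longrightarrow> cylx x (m x) \<inter> bdry N \<subseteq> U" by metis
  have "U = (\<Union>x\<in>U. cylx x (m x)) \<inter> bdry N"
    using m H by auto
  moreover have "open (\<Union>x\<in>U. cylx x (m x))" by (auto intro: open_cylx)
  ultimately show "openin (bdry_top N) U"
    by (auto simp: bdry_top_def openin_open)
qed

lemma closedin_bdry_iff: "closedin (bdry_top N) S \<longleftrightarrow> closed S \<and> S \<subseteq> bdry N"
  unfolding bdry_top_def using closed_bdry closedin_closed_eq by blast

lemma CN_compact: "S \<in> CN N \<Longrightarrow> compact S"
proof -
  assume "S \<in> CN N"
  then have "closed S" "S \<subseteq> bdry N" by (auto simp: CN_def closedin_bdry_iff)
  then show ?thesis using compact_Int_closed[OF compact_bdry, of S N] by (simp add: Int_absorb1)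
qed

lemma closure_cylx: "closed S \<Longrightarrow> (\<And>m. cylx x m \<inter> S \<noteq> {}) \<Longrightarrow> x \<in> S"
proof (rule ccontr)
  assume S: "closed S" and H: "\<And>m. cylx x m \<inter> S \<noteq> {}" and "x \<notin> S"
  then obtain m where "cylx x m \<subseteq> -S" using open_cyl_nbhd[of "-S" x] by auto
  then show False using H[of m] by auto
qed




definition pre :: "int list \<Rightarrow> (nat \<Rightarrow> int) \<Rightarrow> bool" where
  "pre u x \<longleftrightarrow> (\<forall>i<length u. x i = u ! i)"

lemma inv_w_snoc: "inv_w (u @ [c]) = [- c] @ inv_w u"
  by (simp add: inv_w_def)

lemma inv_w_Nil[simp]: "inv_w [] = []"
  by (simp add: inv_w_def)

lemma L1: "pre u x \<Longrightarrow> act_bdry (inv_w u) x = (\<lambda>n. x (n + length u))"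
proof (induction u rule: rev_induct)
  case Nil then show ?case by simp
next
  case (snoc c u)
  have pu: "pre u x" using snoc.prems by (auto simp: pre_def nth_append)
  have xc: "x (length u) = c" using snoc.prems by (auto simp: pre_def)
  have "act_bdry (inv_w (u @ [c])) x = cons_red_inf (- c) (\<lambda>n. x (n + length u))"
    using snoc.IH[OF pu] by (simp add: inv_w_snoc act_bdry_append)
  also have "\<dots> = (\<lambda>n. x (n + length (u @ [c])))"
    using xc by (auto simp: cons_red_inf_def intro!: ext)
  finally show ?case .
qed

lemma reduced_appendD: "reduced (xs @ ys) \<Longrightarrow> reduced xs"
  unfolding reduced_def
proof (intro allI impI)
  fix i assume H: "\<forall>i. Suc i < length (xs @ ys) \<longrightarrow> (xs @ ys) ! Suc i \<noteq> - (xs @ ys) ! i"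
    and i: "Suc i < length xs"
  then have "(xs @ ys) ! Suc i \<noteq> - (xs @ ys) ! i" by simp
  then show "xs ! Suc i \<noteq> - xs ! i" using i by (simp add: nth_append)
qed

lemma reduced_snoc2: "reduced (u @ [c, b]) \<Longrightarrow> b \<noteq> - c"
proof -
  assume r: "reduced (u @ [c, b])"
  have "Suc (length u) < length (u @ [c, b])" by simp
  with r have "(u @ [c, b]) ! Suc (length u) \<noteq> - ((u @ [c, b]) ! length u)"
    unfolding reduced_def by blast
  then show ?thesis by (simp add: nth_append)
qed

lemma L2: "reduced (u @ [b]) \<Longrightarrow> act_bdry (inv_w u) x 0 = b \<Longrightarrow> pre (u @ [b]) x"
proof (induction u arbitrary: b rule: rev_induct)
  case Nil then show ?case by (simp add: pre_def)
next
  case (snoc c u)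
  let ?y = "act_bdry (inv_w u) x"
  have eq: "act_bdry (inv_w (u @ [c])) x = cons_red_inf (- c) ?y"
    by (simp add: inv_w_snoc act_bdry_append)
  have bc: "b \<noteq> - c" using reduced_snoc2[of u c b] snoc.prems(1) by simp
  show ?case
  proof (cases "?y 0 = c")
    case True
    have r1: "reduced (u @ [c])" using snoc.prems(1) reduced_appendD[of "u @ [c]" "[b]"] by simp
    have p1: "pre (u @ [c]) x" using snoc.IH[OF r1 True] .
    then have "pre u x" by (auto simp: pre_def nth_append)
    then have yv: "?y = (\<lambda>n. x (n + length u))" by (rule L1)
    have "cons_red_inf (- c) ?y 0 = ?y 1" using True by (simp add: cons_red_inf_def)
    then have "x (Suc (length u)) = b" using snoc.prems(2) eq yv by simp
    then show ?thesis using p1 by (auto simp: pre_def nth_append less_Suc_eq)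
  next
    case False
    then have "cons_red_inf (- c) ?y 0 = - c" by (simp add: cons_red_inf_def)
    then show ?thesis using snoc.prems(2) eq bc by simp
  qed
qed

lemma reduced_Cons: "reduced (c # u) \<longleftrightarrow> reduced u \<and> (u \<noteq> [] \<longrightarrow> hd u \<noteq> - c)"
proof
  assume H: "reduced (c # u)"
  have "reduced u" unfolding reduced_def
  proof (intro allI impI)
    fix i assume "Suc i < length u"
    then have "Suc (Suc i) < length (c # u)" by simp
    then have "(c # u) ! Suc (Suc i) \<noteq> - (c # u) ! Suc i" using H unfolding reduced_def by blast
    then show "u ! Suc i \<noteq> - u ! i" by simp
  qed
  moreover have "hd u \<noteq> - c" if un: "u \<noteq> []"
  proof -
    obtain d v where "u = d # v" using un by (meson neq_Nil_conv)
    then have "Suc 0 < length (c # u)" by simp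
    then have "(c # u) ! Suc 0 \<noteq> - (c # u) ! 0" using H unfolding reduced_def by blast
    then show ?thesis using \<open>u = d # v\<close> by simp
  qed
  ultimately show "reduced u \<and> (u \<noteq> [] \<longrightarrow> hd u \<noteq> - c)" by blast
next
  assume H: "reduced u \<and> (u \<noteq> [] \<longrightarrow> hd u \<noteq> - c)"
  show "reduced (c # u)" unfolding reduced_def
  proof (intro allI impI)
    fix i assume i: "Suc i < length (c # u)"
    show "(c # u) ! Suc i \<noteq> - (c # u) ! i"
    proof (cases i)
      case 0
      then have "u \<noteq> []" using i by auto
      then show ?thesis using H 0 by (cases u) auto
    next
      case (Suc k)
      then have "Suc k < length u" using i by simp
      then show ?thesis using H Suc unfolding reduced_def by simp
    qed
  qed
qed

lemma reduced_Nil[simp]: "reduced []" and reduced_single[simp]: "reduced [a]"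
  by (auto simp: reduced_def)

lemma mult_Cons: "mult (c # u) w = cons_red c (mult u w)"
  by (simp add: mult_def)

lemma mult_Nil[simp]: "mult [] w = w"
  by (simp add: mult_def)

lemma mult_snoc1: "reduced u \<Longrightarrow> mult u [a] = (if u \<noteq> [] \<and> last u = - a then butlast u else u @ [a])"
proof (induction u)
  case Nil then show ?case by simp
next
  case (Cons c u)
  have ru: "reduced u" and hu: "u \<noteq> [] \<Longrightarrow> hd u \<noteq> - c" using Cons.prems by (auto simp: reduced_Cons)
  show ?case
  proof (cases "u = []")
    case True then show ?thesis by (auto simp: mult_Cons cons_red_def)
  next
    case False
    note IH = Cons.IH[OF ru]
    show ?thesis
    proof (cases "last u = - a")
      case True
      show ?thesis
      proof (cases "butlast u")
        case Nil
        then show ?thesis using False True IH by (auto simp: mult_Cons cons_red_def)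
      next
        case (Cons d v)
        have "hd u = d" using Cons False by (metis append_butlast_last_id hd_append2 list.sel(1) list.simps(3))
        then show ?thesis using False True IH Cons hu by (auto simp: mult_Cons cons_red_def)
      qed
    next
      case False2: False
      obtain d v where uv: "u = d # v" using False by (cases u) auto
      then show ?thesis using False False2 IH hu by (auto simp: mult_Cons cons_red_def)
    qed
  qed
qed

lemma mult_inv_append: "mult (inv_w p) (p @ w) = w"
proof (induction p arbitrary: w rule: rev_induct)
  case Nil then show ?case by simp
next
  case (snoc d p)
  have "mult (inv_w (p @ [d])) ((p @ [d]) @ w) = cons_red (- d) (mult (inv_w p) (p @ (d # w)))"
    by (simp add: inv_w_snoc mult_Cons)
  also have "\<dots> = w" using snoc.IH[of "d # w"] by (simp add: cons_red_def)
  finally show ?case .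
qed

lemma dX_Nil: "dX [] u = length u"
  by (simp add: dX_def)

lemma act_cont:
  assumes g: "set g \<subseteq> letters N" and O: "openin (bdry_top N) Vo"
  shows "openin (bdry_top N) {x \<in> bdry N. act_bdry g x \<in> Vo}"
proof -
  have "\<exists>m. cylx x m \<inter> bdry N \<subseteq> {x \<in> bdry N. act_bdry g x \<in> Vo}"
    if x: "x \<in> bdry N" "act_bdry g x \<in> Vo" for x
  proof -
    obtain m where m: "cylx (act_bdry g x) m \<inter> bdry N \<subseteq> Vo"
      using O x(2) by (auto simp: openin_bdry_iff)
    have "cylx x (m + length g) \<inter> bdry N \<subseteq> {x \<in> bdry N. act_bdry g x \<in> Vo}"
    proof
      fix y assume y: "y \<in> cylx x (m + length g) \<inter> bdry N"
      then have "agree (act_bdry g y) (act_bdry g x) m"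
        by (intro act_agree) (simp add: agree_cylx)
      then have "act_bdry g y \<in> cylx (act_bdry g x) m" by (simp add: agree_cylx)
      moreover have "act_bdry g y \<in> bdry N" using y g by (auto intro: act_bdry_in)
      ultimately show "y \<in> {x \<in> bdry N. act_bdry g x \<in> Vo}" using m y by auto
    qed
    then show ?thesis by blast
  qed
  then show ?thesis by (subst openin_bdry_iff) auto
qed

lemma act_image_eq:
  assumes g: "set g \<subseteq> letters N" and S: "S \<subseteq> bdry N"
  shows "act_bdry g ` S = {x \<in> bdry N. act_bdry (inv_w g) x \<in> S}"
proof
  show "act_bdry g ` S \<subseteq> {x \<in> bdry N. act_bdry (inv_w g) x \<in> S}"
    using g S by (auto intro: act_bdry_in simp: act_inv1)
  show "{x \<in> bdry N. act_bdry (inv_w g) x \<in> S} \<subseteq> act_bdry g ` S"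
  proof
    fix x assume "x \<in> {x \<in> bdry N. act_bdry (inv_w g) x \<in> S}"
    then show "x \<in> act_bdry g ` S" using act_inv2[OF g] by (metis (mono_tags, lifting) image_eqI mem_Collect_eq)
  qed
qed




definition SubS :: "nat \<Rightarrow> (nat \<Rightarrow> int) set \<Rightarrow> (nat \<Rightarrow> int) set set" where
  "SubS N U = {S \<in> CN N. S \<subseteq> U}"
definition Hit :: "nat \<Rightarrow> (nat \<Rightarrow> int) set \<Rightarrow> (nat \<Rightarrow> int) set set" where
  "Hit N U = {S \<in> CN N. S \<inter> U \<noteq> {}}"
definition VB :: "nat \<Rightarrow> (nat \<Rightarrow> int) set set set" where
  "VB N = {SubS N U | U. openin (bdry_top N) U} \<union> {Hit N U | U. openin (bdry_top N) U}"

lemma Vietoris_VB: "Vietoris N = topology_generated_by (VB N)"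
  unfolding Vietoris_def VB_def SubS_def Hit_def by simp

lemma openin_bdry_top_bdry: "openin (bdry_top N) (bdry N)"
  by (simp add: bdry_top_def)

lemma SubS_bdry: "SubS N (bdry N) = CN N"
  by (auto simp: SubS_def CN_def)

lemma UVB: "\<Union>(VB N) = CN N"
proof
  show "\<Union>(VB N) \<subseteq> CN N" by (auto simp: VB_def SubS_def Hit_def)
  have "CN N \<in> VB N" unfolding VB_def using SubS_bdry openin_bdry_top_bdry by blast
  then show "CN N \<subseteq> \<Union>(VB N)" by blast
qed

lemma topspace_Vietoris[simp]: "topspace (Vietoris N) = CN N"
  by (simp add: Vietoris_VB UVB)

lemma openin_Vietoris_sub: "openin (Vietoris N) A \<Longrightarrow> A \<subseteq> CN N"
  using openin_subset by fastforce

lemma SubS_open: "openin (bdry_top N) U \<Longrightarrow> openin (Vietoris N) (SubS N U)"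
  unfolding Vietoris_VB by (rule topology_generated_by_Basis) (auto simp: VB_def)

lemma Hit_open: "openin (bdry_top N) U \<Longrightarrow> openin (Vietoris N) (Hit N U)"
  unfolding Vietoris_VB by (rule topology_generated_by_Basis) (auto simp: VB_def)

lemma pre_map: "pre (map x [0..<m]) y \<longleftrightarrow> y \<in> cylx x m"
  by (auto simp: pre_def cylx_def)

lemma pre_cylx: "{y. pre w y} = cylx (\<lambda>i. w ! i) (length w)"
  by (auto simp: pre_def cylx_def)

definition Wl :: "nat \<Rightarrow> int list list \<Rightarrow> (nat \<Rightarrow> int) set" where
  "Wl N ws = (\<Union>w\<in>set ws. {y. pre w y}) \<inter> bdry N"

lemma open_pre: "open {y. pre w y}"
  by (simp add: pre_cylx open_cylx)

lemma closed_pre: "closed {y. pre w y}"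
  by (simp add: pre_cylx closed_cylx)

lemma openin_Wl: "openin (bdry_top N) (Wl N ws)"
  unfolding Wl_def bdry_top_def by (auto simp: openin_open intro!: open_pre)

lemma openin_bdry_Wl: "openin (bdry_top N) (bdry N - Wl N ws)"
proof -
  have "bdry N - Wl N ws = (- (\<Union>w\<in>set ws. {y. pre w y})) \<inter> bdry N" by (auto simp: Wl_def)
  moreover have "open (- (\<Union>w\<in>set ws. {y. pre w y}))"
    by (intro open_Compl closed_UN) (auto intro: closed_pre)
  ultimately show ?thesis unfolding bdry_top_def by (auto simp: openin_open)
qed

fun gen :: "nat \<Rightarrow> bool \<times> int list list \<Rightarrow> (nat \<Rightarrow> int) set set" where
  "gen N (True, ws) = SubS N (Wl N ws)"
| "gen N (False, ws) = Hit N (Wl N ws)"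

lemma gen_open: "openin (Vietoris N) (gen N p)"
  by (cases p; cases "fst p") (auto intro: SubS_open Hit_open openin_Wl)

definition fin_int :: "nat \<Rightarrow> (bool \<times> int list list) list \<Rightarrow> (nat \<Rightarrow> int) set set" where
  "fin_int N l = CN N \<inter> \<Inter>(gen N ` set l)"

lemma fin_int_append: "fin_int N (l1 @ l2) = fin_int N l1 \<inter> fin_int N l2"
  by (auto simp: fin_int_def)

lemma refine_SubS:
  assumes U: "openin (bdry_top N) U" and S: "S \<in> SubS N U"
  shows "\<exists>l. S \<in> fin_int N l \<and> fin_int N l \<subseteq> SubS N U"
proof -
  have SC: "S \<in> CN N" "S \<subseteq> U" using S by (auto simp: SubS_def)
  have "\<forall>x\<in>S. \<exists>m. cylx x m \<inter> bdry N \<subseteq> U" using U SC(2) by (auto simp: openin_bdry_iff)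
  then obtain m where m: "\<And>x. x \<in> S \<Longrightarrow> cylx x (m x) \<inter> bdry N \<subseteq> U" by metis
  have cS: "compact S" using CN_compact SC(1) .
  obtain C' where C': "C' \<subseteq> S" "finite C'" "S \<subseteq> (\<Union>x\<in>C'. cylx x (m x))"
    by (rule compactE_image[OF cS, of S "\<lambda>x. cylx x (m x)"]) (auto intro: open_cylx)
  obtain xs where xs: "set xs = C'" using C'(2) finite_list by blast
  define ws where "ws = map (\<lambda>x. map x [0..<m x]) xs"
  have Wl_eq: "Wl N ws = (\<Union>x\<in>C'. cylx x (m x)) \<inter> bdry N"
    unfolding Wl_def ws_def using xs by (auto simp: pre_map)
  have Sb: "S \<subseteq> bdry N" using SC(1) by (auto simp: CN_def)
  have "S \<in> fin_int N [(True, ws)]"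
    using SC(1) C'(3) Sb by (auto simp: fin_int_def SubS_def Wl_eq)
  moreover have "fin_int N [(True, ws)] \<subseteq> SubS N U"
  proof
    fix T assume T: "T \<in> fin_int N [(True, ws)]"
    then have "T \<subseteq> (\<Union>x\<in>C'. cylx x (m x)) \<inter> bdry N" "T \<in> CN N"
      by (auto simp: fin_int_def SubS_def Wl_eq)
    moreover have "(\<Union>x\<in>C'. cylx x (m x)) \<inter> bdry N \<subseteq> U" using m C'(1) by blast
    ultimately show "T \<in> SubS N U" by (auto simp: SubS_def)
  qed
  ultimately show ?thesis by blast
qed

lemma refine_Hit:
  assumes U: "openin (bdry_top N) U" and S: "S \<in> Hit N U"
  shows "\<exists>l. S \<in> fin_int N l \<and> fin_int N l \<subseteq> Hit N U"
proof -
  obtain x where x: "x \<in> S" "x \<in> U" and SC: "S \<in> CN N" using S by (auto simp: Hit_def)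
  obtain m where m: "cylx x m \<inter> bdry N \<subseteq> U" using U x by (auto simp: openin_bdry_iff)
  define ws where "ws = [map x [0..<m]]"
  have Wl_eq: "Wl N ws = cylx x m \<inter> bdry N"
    unfolding Wl_def ws_def by (auto simp: pre_map)
  have xb: "x \<in> bdry N" using SC x by (auto simp: CN_def)
  have "S \<in> fin_int N [(False, ws)]"
    using SC x xb by (auto simp: fin_int_def Hit_def Wl_eq)
  moreover have "fin_int N [(False, ws)] \<subseteq> Hit N U"
    using m by (auto simp: fin_int_def Hit_def Wl_eq)
  ultimately show ?thesis by blast
qed

lemma refine_open:
  assumes "openin (Vietoris N) A" "S \<in> A"
  shows "\<exists>l. S \<in> fin_int N l \<and> fin_int N l \<subseteq> A"
proof -
  have "generate_topology_on (VB N) A"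
    using assms(1) by (simp add: Vietoris_VB openin_topology_generated_by_iff)
  then show ?thesis using assms(2)
  proof (induction arbitrary: S)
    case Empty then show ?case by simp
  next
    case (Int a b)
    then obtain l1 l2 where "S \<in> fin_int N l1" "fin_int N l1 \<subseteq> a" "S \<in> fin_int N l2" "fin_int N l2 \<subseteq> b"
      by (meson IntD1 IntD2)
    then show ?case by (intro exI[of _ "l1 @ l2"]) (auto simp: fin_int_append)
  next
    case (UN K)
    then obtain k where "k \<in> K" "S \<in> k" by blast
    then show ?case using UN.IH by blast
  next
    case (Basis s)
    then show ?case unfolding VB_def using refine_SubS refine_Hit by blast
  qed
qed

lemma VB_Pow: "{U. openin (Vietoris N) U} \<subseteq> Pow (CN N)"
  using openin_Vietoris_sub by blast

lemma sets_borel_CN_opens: "sets (borel_CN N) = sigma_sets (CN N) {U. openin (Vietoris N) U}"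
  unfolding borel_CN_def using VB_Pow by (rule sets_measure_of)

lemma space_borel_CN[simp]: "space (borel_CN N) = CN N"
  unfolding borel_CN_def using VB_Pow by (rule space_measure_of)

lemma gen_sub: "gen N p \<subseteq> CN N"
  using gen_open openin_Vietoris_sub by blast

lemma fin_int_in: "fin_int N l \<in> sigma_sets (CN N) (range (gen N))"
proof (induction l)
  case Nil
  have "CN N \<in> sigma_sets (CN N) (range (gen N))"
    by (metis sigma_sets_top)
  then show ?case by (simp add: fin_int_def)
next
  case (Cons p l)
  interpret sigma_algebra "CN N" "sigma_sets (CN N) (range (gen N))"
    by (rule sigma_algebra_sigma_sets) (use gen_sub in blast)
  have "fin_int N (p # l) = gen N p \<inter> fin_int N l" using gen_sub[of N p] by (auto simp: fin_int_def)
  moreover have "gen N p \<in> sigma_sets (CN N) (range (gen N))" by blast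
  ultimately show ?case using Cons by (simp add: Int)
qed

lemma sets_borel_CN: "sets (borel_CN N) = sigma_sets (CN N) (range (gen N))"
  unfolding sets_borel_CN_opens
proof (rule sigma_sets_eqI)
  fix b assume "b \<in> range (gen N)"
  then show "b \<in> sigma_sets (CN N) {U. openin (Vietoris N) U}" using gen_open by blast
next
  fix a assume a: "a \<in> {U. openin (Vietoris N) U}"
  interpret sigma_algebra "CN N" "sigma_sets (CN N) (range (gen N))"
    by (rule sigma_algebra_sigma_sets) (use gen_sub in blast)
  define L where "L = {l. fin_int N l \<subseteq> a}"
  have "a = (\<Union>l\<in>L. fin_int N l)"
    using refine_open[of N a] a unfolding L_def by blast
  moreover have "(\<Union>l\<in>L. fin_int N l) \<in> sigma_sets (CN N) (range (gen N))"
    by (rule countable_UN') (auto intro: fin_int_in)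
  ultimately show "a \<in> sigma_sets (CN N) (range (gen N))" by simp
qed




definition An :: "(nat \<Rightarrow> int) set \<Rightarrow> nat \<Rightarrow> (nat \<Rightarrow> int) set" where
  "An T n = (\<Union>y\<in>T. cylx y n)"

lemma closed_An: "closed (An T n)"
proof -
  have "- An T n = (\<Union>z\<in>- An T n. cylx z n)"
  proof
    show "- An T n \<subseteq> (\<Union>z\<in>- An T n. cylx z n)" by auto
    show "(\<Union>z\<in>- An T n. cylx z n) \<subseteq> - An T n"
    proof
      fix w assume "w \<in> (\<Union>z\<in>- An T n. cylx z n)"
      then obtain z where z: "z \<notin> An T n" "w \<in> cylx z n" by auto
      show "w \<in> - An T n"
      proof
        assume "w \<in> An T n"
        then obtain y where "y \<in> T" "w \<in> cylx y n" by (auto simp: An_def)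
        then have "z \<in> cylx y n" using z(2) by (auto simp: cylx_def)
        then show False using z(1) \<open>y \<in> T\<close> by (auto simp: An_def)
      qed
    qed
  qed
  moreover have "open (\<Union>z\<in>- An T n. cylx z n)" by (auto intro: open_cylx)
  ultimately show ?thesis by (metis closed_def)
qed

lemma An_mono: "m \<le> n \<Longrightarrow> An T n \<subseteq> An T m"
  unfolding An_def using cylx_mono by blast

lemma HI_char:
  assumes S1: "compact S1" and S2: "closed S2" and C: "closed C"
  shows "S1 \<inter> S2 \<inter> C \<noteq> {} \<longleftrightarrow>
     (\<forall>n. \<exists>v. length v = n \<and> S1 \<inter> C \<inter> {y. pre v y} \<noteq> {} \<and> S2 \<inter> C \<inter> {y. pre v y} \<noteq> {})"
proof
  assume "S1 \<inter> S2 \<inter> C \<noteq> {}"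
  then obtain x where x: "x \<in> S1" "x \<in> S2" "x \<in> C" by blast
  show "\<forall>n. \<exists>v. length v = n \<and> S1 \<inter> C \<inter> {y. pre v y} \<noteq> {} \<and> S2 \<inter> C \<inter> {y. pre v y} \<noteq> {}"
  proof
    fix n
    have "pre (map x [0..<n]) x" by (simp add: pre_map)
    then show "\<exists>v. length v = n \<and> S1 \<inter> C \<inter> {y. pre v y} \<noteq> {} \<and> S2 \<inter> C \<inter> {y. pre v y} \<noteq> {}"
      using x by (intro exI[of _ "map x [0..<n]"]) auto
  qed
next
  assume H: "\<forall>n. \<exists>v. length v = n \<and> S1 \<inter> C \<inter> {y. pre v y} \<noteq> {} \<and> S2 \<inter> C \<inter> {y. pre v y} \<noteq> {}"
  let ?T = "S2 \<inter> C"
  have ne: "S1 \<inter> C \<inter> An ?T n \<noteq> {}" for n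
  proof -
    obtain v where v: "length v = n" "S1 \<inter> C \<inter> {y. pre v y} \<noteq> {}" "S2 \<inter> C \<inter> {y. pre v y} \<noteq> {}"
      using H by blast
    then obtain x y where xy: "x \<in> S1" "x \<in> C" "pre v x" "y \<in> S2" "y \<in> C" "pre v y" by blast
    then have "x \<in> cylx y n" using v(1) by (auto simp: pre_def cylx_def)
    then have "x \<in> An ?T n" using xy by (auto simp: An_def)
    then show ?thesis using xy by blast
  qed
  have "(S1 \<inter> C) \<inter> \<Inter>(range (An ?T)) \<noteq> {}"
  proof (rule compact_imp_fip)
    show "compact (S1 \<inter> C)" using S1 C by (rule compact_Int_closed)
    show "\<And>T. T \<in> range (An ?T) \<Longrightarrow> closed T" using closed_An by blast
    fix F' assume F': "finite F'" "F' \<subseteq> range (An ?T)"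
    then obtain I where I: "finite I" "F' = An ?T ` I" by (meson finite_subset_image)
    define n0 where "n0 = Max (insert 0 I)"
    have "An ?T n0 \<subseteq> \<Inter>F'"
    proof -
      have "i \<le> n0" if "i \<in> I" for i using I(1) that unfolding n0_def by simp
      then show ?thesis using I(2) An_mono by blast
    qed
    then show "S1 \<inter> C \<inter> \<Inter>F' \<noteq> {}" using ne[of n0] by blast
  qed
  then obtain x where x: "x \<in> S1" "x \<in> C" "\<And>n. x \<in> An ?T n" by blast
  have "cylx x m \<inter> ?T \<noteq> {}" for m
  proof -
    obtain y where "y \<in> ?T" "x \<in> cylx y m" using x(3)[of m] by (auto simp: An_def)
    then have "y \<in> cylx x m" by (simp add: cylx_sym)
    then show ?thesis using \<open>y \<in> ?T\<close> by blast
  qed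
  then have "x \<in> ?T" using closure_cylx[of ?T x] S2 C by blast
  then show "S1 \<inter> S2 \<inter> C \<noteq> {}" using x by blast
qed

abbreviation PM :: "nat \<Rightarrow> ((nat \<Rightarrow> int) set \<times> (nat \<Rightarrow> int) set) measure" where
  "PM N \<equiv> borel_CN N \<Otimes>\<^sub>M borel_CN N"

lemma space_PM: "space (PM N) = CN N \<times> CN N"
  by (simp add: space_pair_measure)

lemma open_in_borel: "openin (Vietoris N) A \<Longrightarrow> A \<in> sets (borel_CN N)"
  by (simp add: sets_borel_CN_opens)

lemma Hit_borel: "openin (bdry_top N) U \<Longrightarrow> Hit N U \<in> sets (borel_CN N)"
  by (intro open_in_borel Hit_open)

lemma SubS_borel: "openin (bdry_top N) U \<Longrightarrow> SubS N U \<in> sets (borel_CN N)"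
  by (intro open_in_borel SubS_open)

definition HI :: "nat \<Rightarrow> (nat \<Rightarrow> int) set \<Rightarrow> ((nat \<Rightarrow> int) set \<times> (nat \<Rightarrow> int) set) set" where
  "HI N C = {p \<in> CN N \<times> CN N. fst p \<inter> snd p \<inter> C \<noteq> {}}"

lemma CN_closed: "S \<in> CN N \<Longrightarrow> closed S" "S \<in> CN N \<Longrightarrow> S \<subseteq> bdry N"
  by (auto simp: CN_def closedin_bdry_iff)

lemma HI_meas:
  assumes Co: "open C" and Cc: "closed C"
  shows "HI N C \<in> sets (PM N)"
proof -
  define R where "R n = (\<Union>v\<in>{v::int list. length v = n}.
      Hit N (C \<inter> {y. pre v y} \<inter> bdry N) \<times> Hit N (C \<inter> {y. pre v y} \<inter> bdry N))" for n
  have opn: "openin (bdry_top N) (C \<inter> {y. pre v y} \<inter> bdry N)" for v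
    unfolding bdry_top_def using Co open_pre by (auto simp: openin_open intro!: exI[of _ "C \<inter> {y. pre v y}"])
  have hit: "S \<in> Hit N (C \<inter> {y. pre v y} \<inter> bdry N) \<longleftrightarrow> S \<in> CN N \<and> S \<inter> C \<inter> {y. pre v y} \<noteq> {}" for S v
    using CN_closed(2)[of S N] by (auto simp: Hit_def)
  have "HI N C = (CN N \<times> CN N) \<inter> (\<Inter>n. R n)"
  proof (intro set_eqI iffI)
    fix p assume p: "p \<in> HI N C"
    then have c: "fst p \<in> CN N" "snd p \<in> CN N" and ne: "fst p \<inter> snd p \<inter> C \<noteq> {}" by (auto simp: HI_def)
    then have "\<forall>n. \<exists>v. length v = n \<and> fst p \<inter> C \<inter> {y. pre v y} \<noteq> {} \<and> snd p \<inter> C \<inter> {y. pre v y} \<noteq> {}"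
      using HI_char[OF CN_compact[OF c(1)] CN_closed(1)[OF c(2)] Cc] by blast
    then show "p \<in> (CN N \<times> CN N) \<inter> (\<Inter>n. R n)"
      using c by (auto simp: R_def hit mem_Times_iff)
  next
    fix p assume p: "p \<in> (CN N \<times> CN N) \<inter> (\<Inter>n. R n)"
    then have c: "fst p \<in> CN N" "snd p \<in> CN N" by auto
    have "\<forall>n. \<exists>v. length v = n \<and> fst p \<inter> C \<inter> {y. pre v y} \<noteq> {} \<and> snd p \<inter> C \<inter> {y. pre v y} \<noteq> {}"
      using p by (auto simp: R_def hit mem_Times_iff)
    then have "fst p \<inter> snd p \<inter> C \<noteq> {}"
      using HI_char[OF CN_compact[OF c(1)] CN_closed(1)[OF c(2)] Cc] by blast
    then show "p \<in> HI N C" using c by (auto simp: HI_def mem_Times_iff)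
  qed
  moreover have "R n \<in> sets (PM N)" for n
    unfolding R_def
    by (rule sets.countable_UN') (auto intro!: pair_measureI Hit_borel opn)
  moreover have "CN N \<times> CN N \<in> sets (PM N)"
    using sets.top[of "PM N"] by (simp add: space_PM)
  ultimately show ?thesis
    by (simp add: sets.Int sets.countable_INT)
qed

definition EE :: "nat \<Rightarrow> ((nat \<Rightarrow> int) set \<times> (nat \<Rightarrow> int) set) set" where
  "EE N = {p \<in> CN N \<times> CN N. fst p \<inter> snd p \<in> CN N}"

lemma pre_eq_len: "pre v1 x \<Longrightarrow> pre v2 x \<Longrightarrow> length v1 = length v2 \<Longrightarrow> v1 = v2"
  by (auto simp: pre_def intro: nth_equalityI)

lemma EE_meas: "EE N \<in> sets (PM N)"
proof -
  define Q where "Q n = (\<Union>vv\<in>{vv::int list \<times> int list. length (fst vv) = n \<and> length (snd vv) = n \<and> fst vv \<noteq> snd vv}.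
      HI N {y. pre (fst vv) y} \<inter> HI N {y. pre (snd vv) y})" for n
  have "EE N = (\<Union>n. Q n)"
  proof (intro set_eqI iffI)
    fix p assume p: "p \<in> EE N"
    then have c: "fst p \<in> CN N" "snd p \<in> CN N" and I: "fst p \<inter> snd p \<in> CN N" by (auto simp: EE_def)
    then obtain x y where xy: "x \<in> fst p \<inter> snd p" "y \<in> fst p \<inter> snd p" "x \<noteq> y" by (auto simp: CN_def)
    then obtain i where i: "x i \<noteq> y i" by auto
    define v1 where "v1 = map x [0..<Suc i]"
    define v2 where "v2 = map y [0..<Suc i]"
    have "v1 \<noteq> v2" using i unfolding v1_def v2_def by (metis lessI map_eq_conv atLeastLessThan_iff set_upt zero_le)
    moreover have "pre v1 x" "pre v2 y" unfolding v1_def v2_def pre_map by simp_all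
    ultimately have "p \<in> Q (Suc i)"
      unfolding Q_def using xy c
      by (intro UN_I[of "(v1, v2)"]) (auto simp: HI_def v1_def v2_def mem_Times_iff)
    then show "p \<in> (\<Union>n. Q n)" by blast
  next
    fix p assume "p \<in> (\<Union>n. Q n)"
    then obtain v1 v2 where v: "length v1 = length v2" "v1 \<noteq> v2" and h: "p \<in> HI N {y. pre v1 y}" "p \<in> HI N {y. pre v2 y}"
      unfolding Q_def by force
    from h obtain x y where xy: "x \<in> fst p \<inter> snd p" "pre v1 x" "y \<in> fst p \<inter> snd p" "pre v2 y"
      and c: "fst p \<in> CN N" "snd p \<in> CN N"
    proof -
      from h(1) obtain x where "x \<in> fst p \<inter> snd p" "pre v1 x" by (auto simp: HI_def)
      moreover from h(2) obtain y where "y \<in> fst p \<inter> snd p" "pre v2 y" by (auto simp: HI_def)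
      moreover have "fst p \<in> CN N" "snd p \<in> CN N" using h(1) by (auto simp: HI_def)
      ultimately show thesis using that by blast
    qed
    have "x \<noteq> y" using xy v pre_eq_len by blast
    moreover have "closed (fst p \<inter> snd p)" "fst p \<inter> snd p \<subseteq> bdry N"
      using CN_closed[OF c(1)] CN_closed[OF c(2)] by auto
    ultimately show "p \<in> EE N" using xy c by (auto simp: EE_def CN_def closedin_bdry_iff mem_Times_iff)
  qed
  moreover have "Q n \<in> sets (PM N)" for n
    unfolding Q_def
    by (rule sets.countable_UN') (auto intro!: sets.Int HI_meas open_pre closed_pre)
  ultimately show ?thesis by auto
qed

lemma Ipre_sub_EE: "U \<subseteq> CN N \<Longrightarrow> Ipre N U \<subseteq> EE N"
  by (auto simp: Ipre_def EE_def)

lemma Ipre_gen: "Ipre N (gen N p) \<in> sets (PM N)"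
proof (cases p)
  case (Pair b ws)
  let ?C = "\<Union>w\<in>set ws. {y. pre w y}"
  have Co: "open ?C" by (auto intro: open_pre)
  have Cc: "closed ?C" by (auto intro!: closed_UN closed_pre)
  show ?thesis
  proof (cases b)
    case True
    have "Ipre N (gen N p) = EE N - HI N (- ?C)"
    proof (intro set_eqI iffI)
      fix q assume "q \<in> Ipre N (gen N p)"
      then show "q \<in> EE N - HI N (- ?C)"
        using Pair True by (auto simp: Ipre_def EE_def HI_def SubS_def Wl_def)
    next
      fix q assume q: "q \<in> EE N - HI N (- ?C)"
      then have "fst q \<inter> snd q \<subseteq> bdry N" by (auto simp: EE_def CN_def)
      then show "q \<in> Ipre N (gen N p)"
        using q Pair True by (auto simp: Ipre_def EE_def HI_def SubS_def Wl_def)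
    qed
    moreover have "HI N (- ?C) \<in> sets (PM N)" using Co Cc by (intro HI_meas) (simp_all only: open_Compl closed_Compl)
    ultimately show ?thesis using EE_meas by auto
  next
    case False
    have "Ipre N (gen N p) = EE N \<inter> HI N ?C"
    proof (intro set_eqI iffI)
      fix q assume "q \<in> Ipre N (gen N p)"
      then show "q \<in> EE N \<inter> HI N ?C"
        using Pair False by (auto simp: Ipre_def EE_def HI_def Hit_def Wl_def)
    next
      fix q assume q: "q \<in> EE N \<inter> HI N ?C"
      then have "fst q \<inter> snd q \<subseteq> bdry N" by (auto simp: EE_def CN_def)
      then show "q \<in> Ipre N (gen N p)"
        using q Pair False by (auto simp: Ipre_def EE_def HI_def Hit_def Wl_def)
    qed
    moreover have "HI N ?C \<in> sets (PM N)" using Co Cc by (intro HI_meas) auto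
    ultimately show ?thesis using EE_meas by auto
  qed
qed

lemma Ipre_meas_PM: "U \<in> sets (borel_CN N) \<Longrightarrow> Ipre N U \<in> sets (PM N)"
  unfolding sets_borel_CN
proof (induction rule: sigma_sets.induct)
  case (Basic a)
  then show ?case using Ipre_gen by auto
next
  case Empty
  then show ?case by (simp add: Ipre_def)
next
  case (Compl a)
  have "a \<subseteq> CN N" using Compl.hyps sigma_sets_into_sp[of "range (gen N)" "CN N"] gen_sub by blast
  have "Ipre N (CN N - a) = EE N - Ipre N a"
    by (auto simp: Ipre_def EE_def)
  then show ?case using Compl.IH EE_meas by auto
next
  case (Union a)
  have "Ipre N (\<Union>i. a i) = (\<Union>i. Ipre N (a i))" by (auto simp: Ipre_def)
  then show ?case using Union.IH by auto
qed

lemma Ipre_meas: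
  assumes "sets M1 = sets (borel_CN N)" "sets M2 = sets (borel_CN N)" "U \<in> sets (borel_CN N)"
  shows "Ipre N U \<in> sets (M1 \<Otimes>\<^sub>M M2)"
  using Ipre_meas_PM[OF assms(3)] sets_pair_measure_cong[OF assms(1,2)] by simp




lemma bdry_cover:
  assumes K: "closed K" "K \<subseteq> bdry N" and V: "\<And>V. V \<in> \<V> \<Longrightarrow> openin (bdry_top N) V" and c: "K \<subseteq> \<Union>\<V>"
  shows "\<exists>F. finite F \<and> F \<subseteq> \<V> \<and> K \<subseteq> \<Union>F"
proof -
  have "compact K" using compact_Int_closed[OF compact_bdry K(1), of N] K(2) by (simp add: Int_absorb1)
  then have "compactin (bdry_top N) K" using K(2) by (simp add: bdry_top_def compactin_subtopology)
  then show ?thesis using V c unfolding compactin_def by blast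
qed

definition D :: "nat \<Rightarrow> nat \<Rightarrow> (nat \<Rightarrow> int) set set" where
  "D N n = {S \<in> CN N. \<exists>x\<in>S. \<exists>y\<in>S. \<exists>i<n. x i \<noteq> y i}"

lemma D_mono: "m \<le> n \<Longrightarrow> D N m \<subseteq> D N n"
  unfolding D_def using less_le_trans by blast

lemma D_sub: "D N n \<subseteq> CN N"
  by (auto simp: D_def)

lemma UN_D: "(\<Union>n. D N n) = CN N"
proof
  show "(\<Union>n. D N n) \<subseteq> CN N" using D_sub by blast
  show "CN N \<subseteq> (\<Union>n. D N n)"
  proof
    fix S assume S: "S \<in> CN N"
    then obtain x y where "x \<in> S" "y \<in> S" "x \<noteq> y" by (auto simp: CN_def)
    then obtain i where "x i \<noteq> y i" by auto
    then have "S \<in> D N (Suc i)" using S \<open>x \<in> S\<close> \<open>y \<in> S\<close> by (auto simp: D_def)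
    then show "S \<in> (\<Union>n. D N n)" by blast
  qed
qed

lemma openin_cylx_bdry: "openin (bdry_top N) (cylx x n \<inter> bdry N)"
  unfolding bdry_top_def by (auto simp: openin_open intro: open_cylx)

lemma D_open: "openin (Vietoris N) (D N n)"
proof (subst openin_subopen, intro ballI)
  fix S assume S: "S \<in> D N n"
  then obtain x y i where xy: "x \<in> S" "y \<in> S" "i < n" "x i \<noteq> y i" by (auto simp: D_def)
  let ?T = "Hit N (cylx x n \<inter> bdry N) \<inter> Hit N (cylx y n \<inter> bdry N)"
  have "openin (Vietoris N) ?T" by (intro openin_Int Hit_open openin_cylx_bdry)
  moreover have "S \<in> ?T" using S xy CN_closed(2)[of S N] by (auto simp: Hit_def D_def)
  moreover have "?T \<subseteq> D N n"
  proof
    fix S' assume "S' \<in> ?T"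
    then obtain x' y' where h: "x' \<in> S'" "y' \<in> S'" "x' \<in> cylx x n" "y' \<in> cylx y n" "S' \<in> CN N"
      by (auto simp: Hit_def)
    then have "x' i = x i" "y' i = y i" using xy(3) by (auto simp: cylx_def)
    then have "x' i \<noteq> y' i" using xy(4) by simp
    then show "S' \<in> D N n" using h xy(3) unfolding D_def by blast
  qed
  ultimately show "\<exists>T. openin (Vietoris N) T \<and> S \<in> T \<and> T \<subseteq> D N n" by blast
qed


lemma D_fin_cover:
  assumes C: "C \<subseteq> VB N" and cov: "D N n \<subseteq> \<Union>C"
  shows "\<exists>C'. finite C' \<and> C' \<subseteq> C \<and> D N n \<subseteq> \<Union>C'"
proof -
  define \<V> where "\<V> = {V. openin (bdry_top N) V \<and> Hit N V \<in> C}"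
  define F where "F = bdry N - \<Union>\<V>"
  have Vo: "\<And>V. V \<in> \<V> \<Longrightarrow> openin (bdry_top N) V" by (auto simp: \<V>_def)
  have "openin (bdry_top N) (\<Union>\<V>)" using Vo by blast
  then have Fc: "closedin (bdry_top N) F" unfolding F_def
    using closedin_diff[OF closedin_topspace[of "bdry_top N"]] by (simp add: bdry_top_def)
  then have Fcl: "closed F" "F \<subseteq> bdry N" by (auto simp: closedin_bdry_iff)
  show ?thesis
  proof (cases "F \<in> D N n")
    case True
    then obtain c where c: "c \<in> C" "F \<in> c" using cov by blast
    then have "c \<in> VB N" using C by blast
    then consider U where "openin (bdry_top N) U" "c = SubS N U" | V where "openin (bdry_top N) V" "c = Hit N V"
      unfolding VB_def by blast
    then obtain U where U: "openin (bdry_top N) U" "c = SubS N U"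
    proof cases
      case (2 V)
      then have "V \<in> \<V>" using c by (auto simp: \<V>_def)
      moreover have "F \<inter> V \<noteq> {}" using c 2 by (auto simp: Hit_def)
      ultimately show ?thesis unfolding F_def by blast
    qed
    then have FU: "F \<subseteq> U" using c by (auto simp: SubS_def)
    obtain W where W: "open W" "U = W \<inter> bdry N" using U(1) by (auto simp: bdry_top_def openin_open)
    have "bdry N - U = bdry N \<inter> - W" using W by auto
    then have Kc: "closed (bdry N - U)" "bdry N - U \<subseteq> bdry N"
      using W closed_bdry by (auto intro!: closed_Int closed_Compl)
    have KV: "bdry N - U \<subseteq> \<Union>\<V>"
    proof
      fix x assume x: "x \<in> bdry N - U"
      then have "x \<notin> F" using FU by blast
      then show "x \<in> \<Union>\<V>" using x unfolding F_def by simp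
    qed
    have "\<exists>F. finite F \<and> F \<subseteq> \<V> \<and> bdry N - U \<subseteq> \<Union>F"
    proof (rule bdry_cover)
      show "closed (bdry N - U)" "bdry N - U \<subseteq> bdry N" using Kc by auto
      show "\<And>V. V \<in> \<V> \<Longrightarrow> openin (bdry_top N) V" by (rule Vo)
      show "bdry N - U \<subseteq> \<Union>\<V>" by (rule KV)
    qed
    then obtain F' where F': "finite F'" "F' \<subseteq> \<V>" "bdry N - U \<subseteq> \<Union>F'"
      by (elim exE conjE)
    let ?C' = "insert c (Hit N ` F')"
    have "finite ?C'" using F' by simp
    moreover have "?C' \<subseteq> C" using c F' by (auto simp: \<V>_def)
    moreover have "D N n \<subseteq> \<Union>?C'"
    proof
      fix S assume S: "S \<in> D N n"
      then have SC: "S \<in> CN N" "S \<subseteq> bdry N" using D_sub CN_closed by blast+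
      show "S \<in> \<Union>?C'"
      proof (cases "S \<subseteq> U")
        case True then show ?thesis using SC U by (auto simp: SubS_def)
      next
        case False
        then obtain x where "x \<in> S" "x \<notin> U" by blast
        then obtain V where "V \<in> F'" "x \<in> V" using F'(3) SC by blast
        then have "S \<in> Hit N V" using SC \<open>x \<in> S\<close> by (auto simp: Hit_def)
        then show ?thesis using \<open>V \<in> F'\<close> by blast
      qed
    qed
    ultimately show ?thesis by blast
  next
    case False
    have agreeF: "\<forall>x\<in>F. \<forall>y\<in>F. \<forall>i<n. x i = y i"
    proof (rule ccontr)
      assume "\<not> (\<forall>x\<in>F. \<forall>y\<in>F. \<forall>i<n. x i = y i)"
      then obtain x y i where "x \<in> F" "y \<in> F" "i < n" "x i \<noteq> y i" by blast
      then have "x \<noteq> y" by auto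
      then have "F \<in> CN N" using Fc Fcl \<open>x \<in> F\<close> \<open>y \<in> F\<close> unfolding CN_def by blast
      then have "F \<in> D N n" using \<open>x \<in> F\<close> \<open>y \<in> F\<close> \<open>i < n\<close> \<open>x i \<noteq> y i\<close> unfolding D_def by blast
      then show False using False by simp
    qed
    define K where "K = bdry N - (\<Union>z\<in>F. cylx z n)"
    have "open (\<Union>z\<in>F. cylx z n)" by (intro open_UN) (auto intro: open_cylx)
    then have "closed (bdry N \<inter> - (\<Union>z\<in>F. cylx z n))" using closed_bdry by (intro closed_Int closed_Compl)
    moreover have "K = bdry N \<inter> - (\<Union>z\<in>F. cylx z n)" unfolding K_def by blast
    ultimately have Kc: "closed K" "K \<subseteq> bdry N" unfolding K_def by auto
    have KV: "K \<subseteq> \<Union>\<V>"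
    proof
      fix x assume x: "x \<in> K"
      then have "x \<notin> F" unfolding K_def by auto
      then show "x \<in> \<Union>\<V>" using x unfolding F_def K_def by simp
    qed
    have "\<exists>F. finite F \<and> F \<subseteq> \<V> \<and> K \<subseteq> \<Union>F"
    proof (rule bdry_cover)
      show "closed (K)" "K \<subseteq> bdry N" using Kc by auto
      show "\<And>V. V \<in> \<V> \<Longrightarrow> openin (bdry_top N) V" by (rule Vo)
      show "K \<subseteq> \<Union>\<V>" by (rule KV)
    qed
    then obtain F' where F': "finite F'" "F' \<subseteq> \<V>" "K \<subseteq> \<Union>F'"
      by (elim exE conjE)
    let ?C' = "Hit N ` F'"
    have "finite ?C'" using F' by simp
    moreover have "?C' \<subseteq> C" using F' by (auto simp: \<V>_def)
    moreover have "D N n \<subseteq> \<Union>?C'"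
    proof
      fix S assume S: "S \<in> D N n"
      then obtain x y i where xy: "x \<in> S" "y \<in> S" "i < n" "x i \<noteq> y i" by (auto simp: D_def)
      have SC: "S \<in> CN N" "S \<subseteq> bdry N" using S D_sub CN_closed by blast+
      have "x \<in> K \<or> y \<in> K"
      proof (rule ccontr)
        assume "\<not> (x \<in> K \<or> y \<in> K)"
        then have "x \<in> (\<Union>z\<in>F. cylx z n)" "y \<in> (\<Union>z\<in>F. cylx z n)"
          using SC xy unfolding K_def by auto
        then obtain z1 z2 where z: "z1 \<in> F" "z2 \<in> F" "x \<in> cylx z1 n" "y \<in> cylx z2 n"
          by blast
        then have "x i = z1 i" "y i = z2 i" "z1 i = z2 i" using agreeF xy(3) by (auto simp: cylx_def)
        then show False using xy(4) by simp
      qed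
      then obtain w where "w \<in> S" "w \<in> K" using xy by blast
      then obtain V where "V \<in> F'" "w \<in> V" using F'(3) by blast
      then have "S \<in> Hit N V" using SC \<open>w \<in> S\<close> by (auto simp: Hit_def)
      then show "S \<in> \<Union>?C'" using \<open>V \<in> F'\<close> by blast
    qed
    ultimately show ?thesis by blast
  qed
qed


lemma CN_in_VB: "CN N \<in> VB N"
  unfolding VB_def using SubS_bdry openin_bdry_top_bdry by blast

lemma fin_rel_eq:
  assumes "Dn \<subseteq> CN N"
  shows "(finite intersection_of (\<lambda>x. x \<in> VB N) relative_to Dn) = (finite' intersection_of (\<lambda>x. x \<in> VB N) relative_to Dn)"
proof (intro ext iffI)
  fix A assume "(finite intersection_of (\<lambda>x. x \<in> VB N) relative_to Dn) A"
  then obtain U F where F: "finite F" "F \<subseteq> VB N" "\<Inter>F = U" "Dn \<inter> U = A"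
    unfolding relative_to_def intersection_of_def by blast
  show "(finite' intersection_of (\<lambda>x. x \<in> VB N) relative_to Dn) A"
  proof (cases "F = {}")
    case True
    have i: "(finite' intersection_of (\<lambda>x. x \<in> VB N)) (CN N)"
      unfolding intersection_of_def using CN_in_VB[of N] by (intro exI[of _ "{CN N}"]) simp
    have "Dn \<inter> CN N = A" using True F assms by auto
    then show ?thesis using i unfolding relative_to_def by blast
  next
    case False
    then have "(finite' intersection_of (\<lambda>x. x \<in> VB N)) U"
      using F unfolding intersection_of_def by blast
    then show ?thesis using F(4) unfolding relative_to_def by blast
  qed
next
  fix A assume "(finite' intersection_of (\<lambda>x. x \<in> VB N) relative_to Dn) A"
  then obtain U F where F: "finite F" "F \<subseteq> VB N" "\<Inter>F = U" "Dn \<inter> U = A"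
    unfolding relative_to_def intersection_of_def by blast
  then have "(finite intersection_of (\<lambda>x. x \<in> VB N)) U"
    unfolding intersection_of_def by blast
  then show "(finite intersection_of (\<lambda>x. x \<in> VB N) relative_to Dn) A"
    using F(4) unfolding relative_to_def by blast
qed

lemma D_compact: "compactin (Vietoris N) (D N n)"
proof -
  have "compact_space (subtopology (Vietoris N) (D N n))"
  proof (rule Alexander_subbase_alt[where \<B> = "VB N" and U = "D N n"])
    show "D N n \<subseteq> \<Union>(VB N)" using D_sub UVB by blast
    show "\<And>C. C \<subseteq> VB N \<Longrightarrow> D N n \<subseteq> \<Union>C \<Longrightarrow> \<exists>C'. finite C' \<and> C' \<subseteq> C \<and> D N n \<subseteq> \<Union>C'"
      by (rule D_fin_cover)
    show "topology (arbitrary union_of (finite intersection_of (\<lambda>x. x \<in> VB N) relative_to D N n)) =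
      subtopology (Vietoris N) (D N n)"
    proof (subst topology_eq, intro allI)
      fix A
      have "openin (subtopology (Vietoris N) (D N n)) = (openin (Vietoris N) relative_to D N n)"
        by (simp add: openin_relative_to)
      also have "openin (Vietoris N) = arbitrary union_of finite' intersection_of (\<lambda>x. x \<in> VB N)"
        by (simp add: Vietoris_VB generate_topology_on_eq[symmetric] openin_topology_generated_by_iff[abs_def])
      finally have "openin (subtopology (Vietoris N) (D N n)) =
          arbitrary union_of (finite' intersection_of (\<lambda>x. x \<in> VB N) relative_to D N n)"
        by (simp add: arbitrary_union_of_relative_to)
      also have "\<dots> = arbitrary union_of (finite intersection_of (\<lambda>x. x \<in> VB N) relative_to D N n)"
        by (simp add: fin_rel_eq[OF D_sub])
      finally show "openin (topology (arbitrary union_of (finite intersection_of (\<lambda>x. x \<in> VB N) relative_to D N n))) A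
          \<longleftrightarrow> openin (subtopology (Vietoris N) (D N n)) A"
        by (simp add: istopology_subbase)
    qed
  qed
  then show ?thesis using D_sub by (simp add: compactin_subspace)
qed

lemma compact_in_D:
  assumes "compactin (Vietoris N) K" shows "\<exists>n. K \<subseteq> D N n"
proof -
  have "K \<subseteq> CN N" using assms compactin_subset_topspace by fastforce
  then have "K \<subseteq> \<Union>(range (D N))" using UN_D by blast
  moreover have op: "\<forall>U\<in>range (D N). openin (Vietoris N) U" using D_open by blast
  moreover have "\<forall>\<U>. (\<forall>U \<in> \<U>. openin (Vietoris N) U) \<and> K \<subseteq> \<Union>\<U> \<longrightarrow> (\<exists>\<F>. finite \<F> \<and> \<F> \<subseteq> \<U> \<and> K \<subseteq> \<Union>\<F>)"
    using assms unfolding compactin_def by blast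
  ultimately obtain F where F: "finite F" "F \<subseteq> range (D N)" "K \<subseteq> \<Union>F"
    by (meson \<open>K \<subseteq> \<Union>(range (D N))\<close>)
  then obtain I where I: "finite I" "F = D N ` I" by (meson finite_subset_image)
  define n where "n = Max (insert 0 I)"
  have "\<And>i. i \<in> I \<Longrightarrow> i \<le> n" using I(1) unfolding n_def by simp
  then have "\<Union>F \<subseteq> D N n" using I(2) D_mono by blast
  then show ?thesis using F(3) by blast
qed

lemma D_borel: "D N n \<in> sets (borel_CN N)"
  by (intro open_in_borel D_open)

lemma SCurr_D_fin: "is_SCurr N \<mu> \<Longrightarrow> emeasure \<mu> (D N n) < \<infinity>"
  unfolding is_SCurr_def using D_compact by blast

lemma sigma_finite_D:
  assumes "sets M = sets (borel_CN N)" "\<And>n. emeasure M (D N n) < \<infinity>"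
  shows "sigma_finite_measure M"
proof
  have sp: "space M = CN N" using sets_eq_imp_space_eq[OF assms(1)] by simp
  show "\<exists>A. countable A \<and> A \<subseteq> sets M \<and> \<Union>A = space M \<and> (\<forall>a\<in>A. emeasure M a \<noteq> \<infinity>)"
  proof -
    have fin: "\<And>n. emeasure M (D N n) \<noteq> \<infinity>" using assms(2) by (simp add: less_top)
    show ?thesis
      using assms(1) fin D_borel UN_D sp by (intro exI[of _ "range (D N)"]) auto
  qed
qed

lemma SCurr_sigma_finite: assumes "is_SCurr N \<mu>" shows "sigma_finite_measure \<mu>"
proof (rule sigma_finite_D)
  show "sets \<mu> = sets (borel_CN N)" using assms by (simp add: is_SCurr_def)
  show "\<And>n. emeasure \<mu> (D N n) < \<infinity>" using SCurr_D_fin[OF assms] .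
qed




lemma sets_borel_sub: "sets (borel_CN N) \<subseteq> Pow (CN N)"
  using sets.space_closed[of "borel_CN N"] by simp

lemma Ihat_sets: "sets (Ihat N M1 M2) = sets (borel_CN N)"
  unfolding Ihat_def using sets.sets_measure_of_eq[of "borel_CN N"] by simp

lemma Ihat_space: "space (Ihat N M1 M2) = CN N"
  unfolding Ihat_def using sets_borel_sub by (simp add: space_measure_of)

lemma Ipre_empty[simp]: "Ipre N {} = {}"
  by (simp add: Ipre_def)

lemma Ihat_emeasure:
  assumes s1: "sets M1 = sets (borel_CN N)" and s2: "sets M2 = sets (borel_CN N)"
    and U: "U \<in> sets (borel_CN N)"
  shows "emeasure (Ihat N M1 M2) U = emeasure (M1 \<Otimes>\<^sub>M M2) (Ipre N U)"
  unfolding Ihat_def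
proof (rule emeasure_measure_of_sigma[OF _ _ _ U])
  show "sigma_algebra (CN N) (sets (borel_CN N))"
    using sets.sigma_algebra_axioms[of "borel_CN N"] by simp
  show "positive (sets (borel_CN N)) (\<lambda>U. emeasure (M1 \<Otimes>\<^sub>M M2) (Ipre N U))"
    by (simp add: positive_def)
  show "countably_additive (sets (borel_CN N)) (\<lambda>U. emeasure (M1 \<Otimes>\<^sub>M M2) (Ipre N U))"
  proof (rule countably_additiveI)
    fix A :: "nat \<Rightarrow> _" assume A: "range A \<subseteq> sets (borel_CN N)" "disjoint_family A"
      "\<Union>(range A) \<in> sets (borel_CN N)"
    have "Ipre N (\<Union>(range A)) = (\<Union>i. Ipre N (A i))" by (auto simp: Ipre_def)
    moreover have "range (\<lambda>i. Ipre N (A i)) \<subseteq> sets (M1 \<Otimes>\<^sub>M M2)"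
      using A(1) Ipre_meas[OF s1 s2] by auto
    moreover have "disjoint_family (\<lambda>i. Ipre N (A i))"
      using A(2) unfolding disjoint_family_on_def Ipre_def by auto
    ultimately show "(\<Sum>i. emeasure (M1 \<Otimes>\<^sub>M M2) (Ipre N (A i))) = emeasure (M1 \<Otimes>\<^sub>M M2) (Ipre N (\<Union>(range A)))"
      by (simp add: suminf_emeasure)
  qed
qed

section \<open>Action on C_N\<close>

definition actC :: "int list \<Rightarrow> (nat \<Rightarrow> int) set \<Rightarrow> (nat \<Rightarrow> int) set" where
  "actC h S = act_bdry h ` S"

lemma FN_letters: "g \<in> FN N \<Longrightarrow> set g \<subseteq> letters N"
  by (simp add: FN_def)

lemma actC_CN:
  assumes h: "set h \<subseteq> letters N" and S: "S \<in> CN N"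
  shows "actC h S \<in> CN N"
proof -
  have Sb: "S \<subseteq> bdry N" and Sc: "closedin (bdry_top N) S" using S by (auto simp: CN_def)
  have eq: "actC h S = {x \<in> bdry N. act_bdry (inv_w h) x \<in> S}"
    unfolding actC_def by (rule act_image_eq[OF h Sb])
  have "openin (bdry_top N) (bdry N - S)" using Sc
    by (metis closedin_def bdry_top_def topspace_euclidean_subtopology)
  then have o: "openin (bdry_top N) {x \<in> bdry N. act_bdry (inv_w h) x \<in> bdry N - S}"
    by (rule act_cont[OF set_inv_w[OF h]])
  have "actC h S = bdry N - {x \<in> bdry N. act_bdry (inv_w h) x \<in> bdry N - S}"
    unfolding eq using act_bdry_in[OF set_inv_w[OF h]] by auto
  then have c: "closedin (bdry_top N) (actC h S)"
    using closedin_diff[OF closedin_topspace[of "bdry_top N"] o] by (simp add: bdry_top_def)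
  obtain x y where xy: "x \<in> S" "y \<in> S" "x \<noteq> y" using S by (auto simp: CN_def)
  have "act_bdry h x \<noteq> act_bdry h y"
    using xy Sb act_inv1[OF h] by (metis subsetD)
  moreover have "act_bdry h x \<in> actC h S" "act_bdry h y \<in> actC h S" using xy by (auto simp: actC_def)
  moreover have "actC h S \<subseteq> bdry N" using Sb act_bdry_in[OF h] by (auto simp: actC_def)
  ultimately show ?thesis using c by (auto simp: CN_def)
qed

lemma actC_inv1: "set h \<subseteq> letters N \<Longrightarrow> S \<subseteq> bdry N \<Longrightarrow> actC (inv_w h) (actC h S) = S"
proof -
  assume h: "set h \<subseteq> letters N" and S: "S \<subseteq> bdry N"
  have "actC (inv_w h) (actC h S) = (\<lambda>x. act_bdry (inv_w h) (act_bdry h x)) ` S"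
    unfolding actC_def image_comp by (simp add: comp_def)
  also have "\<dots> = (\<lambda>x. x) ` S" using act_inv1[OF h] S by (intro image_cong) auto
  finally show ?thesis by simp
qed

lemma actC_inv2: "set h \<subseteq> letters N \<Longrightarrow> S \<subseteq> bdry N \<Longrightarrow> actC h (actC (inv_w h) S) = S"
  using actC_inv1[of "inv_w h" N S] set_inv_w[of h N] by simp

lemma actC_Int:
  assumes "set h \<subseteq> letters N" "S \<subseteq> bdry N" "T \<subseteq> bdry N"
  shows "actC h (S \<inter> T) = actC h S \<inter> actC h T"
  unfolding actC_def
proof (rule inj_on_image_Int)
  show "inj_on (act_bdry h) (S \<union> T)"
    using assms by (intro inj_on_inverseI[of _ "act_bdry (inv_w h)"]) (auto simp: act_inv1)
qed auto

lemma actC_meas: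
  assumes h: "set h \<subseteq> letters N"
  shows "actC h \<in> measurable (borel_CN N) (borel_CN N)"
proof (rule measurable_sigma_sets[OF sets_borel_CN])
  show "range (gen N) \<subseteq> Pow (CN N)" using gen_sub by blast
  show "actC h \<in> space (borel_CN N) \<rightarrow> CN N" using actC_CN[OF h] by auto
  fix y assume "y \<in> range (gen N)"
  then obtain b ws where y: "y = gen N (b, ws)" by auto
  define Oo where "Oo = {x \<in> bdry N. act_bdry h x \<in> Wl N ws}"
  have Oo: "openin (bdry_top N) Oo" unfolding Oo_def by (rule act_cont[OF h openin_Wl])
  have sub: "actC h S \<subseteq> Wl N ws \<longleftrightarrow> S \<subseteq> Oo" if "S \<in> CN N" for S
    using that CN_closed(2)[OF that] actC_CN[OF h that] act_bdry_in[OF h]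
    unfolding Oo_def actC_def Wl_def by auto
  have hit: "actC h S \<inter> Wl N ws \<noteq> {} \<longleftrightarrow> S \<inter> Oo \<noteq> {}" if "S \<in> CN N" for S
    using that CN_closed(2)[OF that] act_bdry_in[OF h]
    unfolding Oo_def actC_def Wl_def by auto
  show "actC h -` y \<inter> space (borel_CN N) \<in> sets (borel_CN N)"
  proof (cases b)
    case True
    have "actC h -` y \<inter> space (borel_CN N) = SubS N Oo"
      using y True sub actC_CN[OF h] by (auto simp: SubS_def)
    then show ?thesis using SubS_borel[OF Oo] by simp
  next
    case False
    have "actC h -` y \<inter> space (borel_CN N) = Hit N Oo"
      using y False hit actC_CN[OF h] by (auto simp: Hit_def)
    then show ?thesis using Hit_borel[OF Oo] by simp
  qed
qed

lemma act_set_eq: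
  assumes g: "set g \<subseteq> letters N" and U: "U \<subseteq> CN N"
  shows "act_set g U = actC (inv_w g) -` U \<inter> CN N"
proof (intro set_eqI iffI)
  fix S assume "S \<in> act_set g U"
  then obtain T where T: "T \<in> U" "S = actC g T" by (auto simp: act_set_def actC_def)
  then have "T \<in> CN N" using U by auto
  then have "actC (inv_w g) S = T" "S \<in> CN N"
    using T actC_inv1[OF g] actC_CN[OF g] CN_closed(2) by auto
  then show "S \<in> actC (inv_w g) -` U \<inter> CN N" using T by auto
next
  fix S assume S: "S \<in> actC (inv_w g) -` U \<inter> CN N"
  then have "S = actC g (actC (inv_w g) S)" using actC_inv2[OF g] CN_closed(2) by auto
  then show "S \<in> act_set g U" using S unfolding act_set_def actC_def by auto
qed

lemma act_set_borel:
  assumes g: "set g \<subseteq> letters N" and U: "U \<in> sets (borel_CN N)"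
  shows "act_set g U \<in> sets (borel_CN N)"
proof -
  have "U \<subseteq> CN N" using U sets_borel_sub by auto
  then have "act_set g U = actC (inv_w g) -` U \<inter> space (borel_CN N)"
    using act_set_eq[OF g] by simp
  then show ?thesis using measurable_sets[OF actC_meas[OF set_inv_w[OF g]] U] by simp
qed

lemma distr_actC:
  assumes mu: "is_SCurr N \<mu>" and g: "g \<in> FN N"
  shows "distr \<mu> (borel_CN N) (actC (inv_w g)) = \<mu>"
proof -
  have gl: "set g \<subseteq> letters N" using g by (rule FN_letters)
  have s: "sets \<mu> = sets (borel_CN N)" using mu by (simp add: is_SCurr_def)
  have sp: "space \<mu> = CN N" using sets_eq_imp_space_eq[OF s] by simp
  have m: "actC (inv_w g) \<in> measurable \<mu> (borel_CN N)"
    using actC_meas[OF set_inv_w[OF gl]] by (simp add: measurable_cong_sets[OF s])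
  show ?thesis
  proof (rule measure_eqI)
    show "sets (distr \<mu> (borel_CN N) (actC (inv_w g))) = sets \<mu>" using s by simp
    fix A assume "A \<in> sets (distr \<mu> (borel_CN N) (actC (inv_w g)))"
    then have A: "A \<in> sets (borel_CN N)" by simp
    have "emeasure (distr \<mu> (borel_CN N) (actC (inv_w g))) A = emeasure \<mu> (actC (inv_w g) -` A \<inter> CN N)"
      using emeasure_distr[OF m A] sp by simp
    also have "\<dots> = emeasure \<mu> (act_set g A)"
    proof -
      have "A \<subseteq> CN N" using A sets_borel_sub by auto
      then show ?thesis using act_set_eq[OF gl] by simp
    qed
    also have "\<dots> = emeasure \<mu> A" using mu g A by (simp add: is_SCurr_def)
    finally show "emeasure (distr \<mu> (borel_CN N) (actC (inv_w g))) A = emeasure \<mu> A" .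
  qed
qed

lemma Ipre_act_set:
  assumes g: "set g \<subseteq> letters N" and U: "U \<subseteq> CN N"
  shows "Ipre N (act_set g U) = (\<lambda>p. (actC (inv_w g) (fst p), actC (inv_w g) (snd p))) -` Ipre N U \<inter> (CN N \<times> CN N)"
proof -
  let ?h = "inv_w g"
  have h: "set ?h \<subseteq> letters N" using set_inv_w[OF g] .
  have key: "S1 \<inter> S2 \<in> act_set g U \<longleftrightarrow> actC ?h S1 \<inter> actC ?h S2 \<in> U"
    if S: "S1 \<in> CN N" "S2 \<in> CN N" for S1 S2
  proof -
    have b: "S1 \<subseteq> bdry N" "S2 \<subseteq> bdry N" using S CN_closed(2) by auto
    have eqI: "actC ?h (S1 \<inter> S2) = actC ?h S1 \<inter> actC ?h S2" using actC_Int[OF h b] .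
    show ?thesis
    proof
      assume "S1 \<inter> S2 \<in> act_set g U"
      then show "actC ?h S1 \<inter> actC ?h S2 \<in> U" using act_set_eq[OF g U] eqI by auto
    next
      assume A: "actC ?h S1 \<inter> actC ?h S2 \<in> U"
      then have "actC ?h (S1 \<inter> S2) \<in> CN N" using eqI U by auto
      then have "actC g (actC ?h (S1 \<inter> S2)) \<in> CN N" using actC_CN[OF g] by blast
      moreover have "S1 \<inter> S2 \<subseteq> bdry N" using b by auto
      ultimately have "S1 \<inter> S2 \<in> CN N" using actC_inv2[OF g, of "S1 \<inter> S2"] by simp
      then show "S1 \<inter> S2 \<in> act_set g U" using act_set_eq[OF g U] eqI A by auto
    qed
  qed
  show ?thesis
    unfolding Ipre_def using key actC_CN[OF h] by auto
qed

lemma Ihat_invariant: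
  assumes mu: "is_SCurr N \<mu>" and nu: "is_SCurr N \<nu>" and g: "g \<in> FN N" and U: "U \<in> sets (borel_CN N)"
  shows "emeasure (Ihat N \<mu> \<nu>) (act_set g U) = emeasure (Ihat N \<mu> \<nu>) U"
proof -
  have gl: "set g \<subseteq> letters N" using g by (rule FN_letters)
  let ?h = "inv_w g"
  let ?P = "\<lambda>p. (actC ?h (fst p), actC ?h (snd p))"
  have s1: "sets \<mu> = sets (borel_CN N)" and s2: "sets \<nu> = sets (borel_CN N)"
    using mu nu by (auto simp: is_SCurr_def)
  have sfnu: "sigma_finite_measure \<nu>" by (rule SCurr_sigma_finite[OF nu])
  have Ub: "U \<subseteq> CN N" using U sets_borel_sub by auto
  have AU: "act_set g U \<in> sets (borel_CN N)" by (rule act_set_borel[OF gl U])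
  have m1: "actC ?h \<in> measurable \<mu> (borel_CN N)"
    using actC_meas[OF set_inv_w[OF gl]] by (simp add: measurable_cong_sets[OF s1])
  have m2: "actC ?h \<in> measurable \<nu> (borel_CN N)"
    using actC_meas[OF set_inv_w[OF gl]] by (simp add: measurable_cong_sets[OF s2])
  have d1: "distr \<mu> (borel_CN N) (actC ?h) = \<mu>" by (rule distr_actC[OF mu g])
  have d2: "distr \<nu> (borel_CN N) (actC ?h) = \<nu>" by (rule distr_actC[OF nu g])
  have pd: "distr \<mu> (borel_CN N) (actC ?h) \<Otimes>\<^sub>M distr \<nu> (borel_CN N) (actC ?h) =
      distr (\<mu> \<Otimes>\<^sub>M \<nu>) (borel_CN N \<Otimes>\<^sub>M borel_CN N) (\<lambda>(x, y). (actC ?h x, actC ?h y))"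
    by (rule pair_measure_distr[OF m1 m2]) (simp add: d2 sfnu)
  have IU: "Ipre N U \<in> sets (borel_CN N \<Otimes>\<^sub>M borel_CN N)" using Ipre_meas_PM[OF U] .
  have mP: "(\<lambda>(x, y). (actC ?h x, actC ?h y)) \<in> measurable (\<mu> \<Otimes>\<^sub>M \<nu>) (borel_CN N \<Otimes>\<^sub>M borel_CN N)"
    using m1 m2 by (simp add: measurable_pair_iff split_beta')
  have spP: "space (\<mu> \<Otimes>\<^sub>M \<nu>) = CN N \<times> CN N"
    using sets_eq_imp_space_eq[OF s1] sets_eq_imp_space_eq[OF s2] by (simp add: space_pair_measure)
  have "emeasure (Ihat N \<mu> \<nu>) (act_set g U) = emeasure (\<mu> \<Otimes>\<^sub>M \<nu>) (Ipre N (act_set g U))"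
    by (rule Ihat_emeasure[OF s1 s2 AU])
  also have "\<dots> = emeasure (\<mu> \<Otimes>\<^sub>M \<nu>) ((\<lambda>(x, y). (actC ?h x, actC ?h y)) -` Ipre N U \<inter> space (\<mu> \<Otimes>\<^sub>M \<nu>))"
    using Ipre_act_set[OF gl Ub] spP by (simp add: split_beta')
  also have "\<dots> = emeasure (distr (\<mu> \<Otimes>\<^sub>M \<nu>) (borel_CN N \<Otimes>\<^sub>M borel_CN N) (\<lambda>(x, y). (actC ?h x, actC ?h y))) (Ipre N U)"
    by (rule emeasure_distr[OF mP IU, symmetric])
  also have "\<dots> = emeasure (\<mu> \<Otimes>\<^sub>M \<nu>) (Ipre N U)"
    using pd d1 d2 by simp
  also have "\<dots> = emeasure (Ihat N \<mu> \<nu>) U"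
    by (rule Ihat_emeasure[OF s1 s2 U, symmetric])
  finally show ?thesis .
qed

lemma Ipre_D: "Ipre N (D N n) \<subseteq> D N n \<times> D N n"
proof
  fix p assume "p \<in> Ipre N (D N n)"
  then obtain x y i where h: "fst p \<in> CN N" "snd p \<in> CN N" "x \<in> fst p \<inter> snd p" "y \<in> fst p \<inter> snd p" "i < n" "x i \<noteq> y i"
    unfolding Ipre_def D_def by auto
  then have "fst p \<in> D N n" "snd p \<in> D N n" unfolding D_def by blast+
  then show "p \<in> D N n \<times> D N n" by (simp add: mem_Times_iff)
qed

lemma Ihat_compact:
  assumes mu: "is_SCurr N \<mu>" and nu: "is_SCurr N \<nu>" and K: "compactin (Vietoris N) K"
  shows "emeasure (Ihat N \<mu> \<nu>) K < \<infinity>"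
proof -
  obtain n where n: "K \<subseteq> D N n" using compact_in_D[OF K] by blast
  have s1: "sets \<mu> = sets (borel_CN N)" and s2: "sets \<nu> = sets (borel_CN N)"
    using mu nu by (auto simp: is_SCurr_def)
  have sfnu: "sigma_finite_measure \<nu>" by (rule SCurr_sigma_finite[OF nu])
  have Db: "D N n \<in> sets (borel_CN N)" by (rule D_borel)
  have "emeasure (Ihat N \<mu> \<nu>) K \<le> emeasure (Ihat N \<mu> \<nu>) (D N n)"
    using n Db by (intro emeasure_mono) (simp_all add: Ihat_sets)
  also have "\<dots> = emeasure (\<mu> \<Otimes>\<^sub>M \<nu>) (Ipre N (D N n))" by (rule Ihat_emeasure[OF s1 s2 Db])
  also have "\<dots> \<le> emeasure (\<mu> \<Otimes>\<^sub>M \<nu>) (D N n \<times> D N n)"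
    using Db s1 s2 by (intro emeasure_mono Ipre_D) auto
  also have "\<dots> = emeasure \<mu> (D N n) * emeasure \<nu> (D N n)"
    using sigma_finite_measure.emeasure_pair_measure_Times[OF sfnu, of "D N n" \<mu> "D N n"] Db s1 s2 by simp
  also have "\<dots> < \<infinity>"
    using SCurr_D_fin[OF mu] SCurr_D_fin[OF nu] by (simp add: ennreal_mult_less_top)
  finally show ?thesis .
qed

lemma Ihat_SCurr:
  assumes mu: "is_SCurr N \<mu>" and nu: "is_SCurr N \<nu>"
  shows "is_SCurr N (Ihat N \<mu> \<nu>)"
  unfolding is_SCurr_def
proof (intro conjI ballI allI impI)
  show "sets (Ihat N \<mu> \<nu>) = sets (borel_CN N)" by (rule Ihat_sets)
  show "\<And>g U. g \<in> FN N \<Longrightarrow> U \<in> sets (borel_CN N) \<Longrightarrow> emeasure (Ihat N \<mu> \<nu>) (act_set g U) = emeasure (Ihat N \<mu> \<nu>) U"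
    by (rule Ihat_invariant[OF mu nu])
  show "\<And>K. compactin (Vietoris N) K \<Longrightarrow> emeasure (Ihat N \<mu> \<nu>) K < \<infinity>"
    by (rule Ihat_compact[OF mu nu])
qed




lemma SubD: assumes "T \<in> Sub N"
  shows "finite T" "T \<subseteq> FN N" "2 \<le> card T" "\<And>u v. u \<in> T \<Longrightarrow> v \<in> T \<Longrightarrow> (u, v) \<in> (edges_in N T)\<^sup>*"
  using assms by (auto simp: Sub_def)

lemma FN_reduced: "u \<in> FN N \<Longrightarrow> reduced u" and FN_set: "u \<in> FN N \<Longrightarrow> set u \<subseteq> letters N"
  by (auto simp: FN_def)

lemma step_exists:
  assumes "T \<in> Sub N" "u \<in> T" "v \<in> T" "u \<noteq> v"
  shows "\<exists>w\<in>T. adj N u w"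
proof -
  have "(u, v) \<in> (edges_in N T)\<^sup>*" using SubD(4)[OF assms(1) assms(2,3)] .
  then show ?thesis
  proof (cases rule: converse_rtranclE)
    case base then show ?thesis using assms(4) by simp
  next
    case (step w) then show ?thesis by (auto simp: edges_in_def)
  qed
qed

lemma adj_cases:
  assumes "adj N u w"
  shows "u \<in> FN N" "\<exists>a\<in>letters N. w = (if u \<noteq> [] \<and> last u = - a then butlast u else u @ [a])"
  using assms by (auto simp: adj_def mult_snoc1 FN_reduced)

lemma length_butlast_le: "length (butlast u) < length u \<or> u = []"
  by (cases u) auto

lemma R1_length: assumes T: "T \<in> R1 N" shows "\<forall>u\<in>T. length u \<le> 1"
proof (rule ccontr)
  assume "\<not> (\<forall>u\<in>T. length u \<le> 1)"
  then obtain u0 where u0: "u0 \<in> T" "length u0 \<ge> 2" by (auto simp: not_le)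
  have TS: "T \<in> Sub N" and T0: "[] \<in> T" and leaf: "\<And>u. u \<in> T \<Longrightarrow> deg N T u = 1 \<Longrightarrow> dX [] u = 1"
    using T by (auto simp: R1_def)
  have fT: "finite T" using SubD(1)[OF TS] .
  define M where "M = Max (length ` T)"
  have "M \<in> length ` T" unfolding M_def using fT u0(1) by (intro Max_in) auto
  then obtain u where u: "u \<in> T" "length u = M" by auto
  have Mge: "\<And>v. v \<in> T \<Longrightarrow> length v \<le> M" unfolding M_def using fT by simp
  have "M \<ge> 2" using Mge[OF u0(1)] u0(2) by simp
  then have un: "u \<noteq> []" using u by auto
  have sub: "{w \<in> T. adj N u w} \<subseteq> {butlast u}"
  proof
    fix w assume w: "w \<in> {w \<in> T. adj N u w}"
    then obtain a where "w = (if u \<noteq> [] \<and> last u = - a then butlast u else u @ [a])"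
      using adj_cases(2)[of N u w] by auto
    moreover have "length w \<le> M" using w Mge by auto
    ultimately show "w \<in> {butlast u}" using u(2) by (auto split: if_splits)
  qed
  obtain w where "w \<in> T" "adj N u w" using step_exists[OF TS u(1) T0 un] by blast
  then have "{w \<in> T. adj N u w} = {butlast u}" using sub by blast
  then have "deg N T u = 1" by (simp add: deg_def)
  then have "dX [] u = 1" using leaf u(1) by simp
  then show False using u(2) \<open>M \<ge> 2\<close> by (simp add: dX_Nil)
qed

lemma finite_R1: "finite (R1 N)"
proof -
  have "R1 N \<subseteq> Pow {xs. set xs \<subseteq> letters N \<and> length xs \<le> 1}"
  proof
    fix T assume T: "T \<in> R1 N"
    then have "T \<subseteq> FN N" using SubD(2) by (auto simp: R1_def)
    then show "T \<in> Pow {xs. set xs \<subseteq> letters N \<and> length xs \<le> 1}"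
      using R1_length[OF T] by (auto simp: FN_def)
  qed
  moreover have "finite (Pow {xs. set xs \<subseteq> letters N \<and> length xs \<le> 1})"
    using finite_lists_length_le[OF finite_letters] by simp
  ultimately show ?thesis by (rule finite_subset)
qed




lemma butlast_FN: "u \<in> FN N \<Longrightarrow> butlast u \<in> FN N"
  unfolding FN_def using reduced_appendD[of "butlast u" "[last u]"]
  by (cases "u = []") (auto simp: append_butlast_last_id in_set_butlastD)

lemma snoc_last_ne: "reduced (p @ [c]) \<Longrightarrow> p \<noteq> [] \<Longrightarrow> last p \<noteq> - c"
proof -
  assume r: "reduced (p @ [c])" and p: "p \<noteq> []"
  have e: "p @ [c] = butlast p @ [last p, c]" using p by simp
  have "reduced (butlast p @ [last p, c])" using r unfolding e .
  then have "c \<noteq> - last p" using reduced_snoc2[of "butlast p" "last p" c] by blast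
  then show ?thesis by auto
qed

lemma adj_snoc: assumes "p \<in> FN N" "p @ [c] \<in> FN N" shows "adj N p (p @ [c])"
proof -
  have c: "c \<in> letters N" using assms(2) by (auto simp: FN_def)
  have "mult p [c] = p @ [c]"
    using mult_snoc1[OF FN_reduced[OF assms(1)], of c] snoc_last_ne[OF FN_reduced[OF assms(2)]] by auto
  then show ?thesis using assms(1) c unfolding adj_def by (intro conjI bexI[of _ c]) auto
qed

lemma Cyl_edge:
  assumes "reduced (p @ [c])" "\<xi> \<in> Cyl N (p, p @ [c])"
  shows "\<xi> 0 = hd (p @ [c])"
proof -
  have "[act_bdry (inv_w p) \<xi> 0] = mult (inv_w p) (p @ [c])" using assms(2) by (simp add: Cyl_def)
  also have "\<dots> = [c]" by (rule mult_inv_append)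
  finally have "act_bdry (inv_w p) \<xi> 0 = c" by simp
  then have "pre (p @ [c]) \<xi>" by (rule L2[OF assms(1)])
  then have "\<xi> 0 = (p @ [c]) ! 0" by (simp add: pre_def)
  then show ?thesis by (simp add: hd_conv_nth)
qed

lemma SCyl_D1:
  assumes T: "T \<in> Sub1 N" and S: "S \<in> SCyl N T"
  shows "S \<in> D N 1"
proof (rule ccontr)
  assume nD: "S \<notin> D N 1"
  have TS: "T \<in> Sub N" and T0: "[] \<in> T" using T by (auto simp: Sub1_def)
  have SC: "S \<in> CN N" and meet: "\<And>e. e \<in> terminal_edges N T \<Longrightarrow> S \<inter> Cyl N e \<noteq> {}"
    using S by (auto simp: SCyl_def)
  obtain x0 where x0: "x0 \<in> S" using SC by (auto simp: CN_def)
  define a where "a = x0 0"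
  have allS: "\<And>x. x \<in> S \<Longrightarrow> x 0 = a"
    using nD SC x0 unfolding D_def a_def by auto
  have fT: "finite T" and TF: "T \<subseteq> FN N" using SubD[OF TS] by auto
  define T' where "T' = {u \<in> T. u = [] \<or> hd u \<noteq> a}"
  have fT': "finite T'" using fT unfolding T'_def by simp
  have T'0: "[] \<in> T'" using T0 unfolding T'_def by simp
  define M where "M = Max (length ` T')"
  have "M \<in> length ` T'" unfolding M_def using fT' T'0 by (intro Max_in) auto
  then obtain u where u: "u \<in> T'" "length u = M" by auto
  have Mge: "\<And>v. v \<in> T' \<Longrightarrow> length v \<le> M" unfolding M_def using fT' by simp
  show False
  proof (cases "u = []")
    case False
    have uT: "u \<in> T" and hu: "hd u \<noteq> a" using u(1) False unfolding T'_def by auto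
    have uF: "u \<in> FN N" using uT TF by auto
    have sub: "{w \<in> T. adj N u w} \<subseteq> {butlast u}"
    proof
      fix w assume w: "w \<in> {w \<in> T. adj N u w}"
      then obtain c where wc: "w = (if u \<noteq> [] \<and> last u = - c then butlast u else u @ [c])"
        using adj_cases(2)[of N u w] by auto
      show "w \<in> {butlast u}"
      proof (rule ccontr)
        assume "w \<notin> {butlast u}"
        then have "w = u @ [c]" using wc by (auto split: if_splits)
        then have "w \<in> T'" "length w > M" using w False hu u(2) unfolding T'_def by auto
        then show False using Mge by fastforce
      qed
    qed
    obtain w where "w \<in> T" "adj N u w" using step_exists[OF TS uT T0 False] by blast
    then have eqs: "{w \<in> T. adj N u w} = {butlast u}" using sub by blast
    then have degu: "deg N T u = 1" by (simp add: deg_def)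
    define p where "p = butlast u"
    have pT: "p \<in> T" using eqs unfolding p_def by blast
    have up: "u = p @ [last u]" using False unfolding p_def by simp
    have pF: "p \<in> FN N" using butlast_FN[OF uF] unfolding p_def .
    have "adj N p u" using adj_snoc[OF pF, of "last u"] up uF by simp
    then have "(p, u) \<in> terminal_edges N T" using pT uT degu by (auto simp: terminal_edges_def edges_in_def)
    then obtain \<xi> where \<xi>: "\<xi> \<in> S" "\<xi> \<in> Cyl N (p, u)" using meet by blast
    have "\<xi> 0 = hd u" using Cyl_edge[of p "last u" \<xi> N] \<xi>(2) up FN_reduced[OF uF] by simp
    then show False using allS[OF \<xi>(1)] hu by simp
  next
    case True
    then have M0: "M = 0" using u(2) by simp
    have hdT: "\<And>v. v \<in> T \<Longrightarrow> v \<noteq> [] \<Longrightarrow> hd v = a"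
    proof (rule ccontr)
      fix v assume "v \<in> T" "v \<noteq> []" "hd v \<noteq> a"
      then have "v \<in> T'" "length v > 0" unfolding T'_def by auto
      then show False using Mge M0 by fastforce
    qed
    obtain v where v: "v \<in> T" "v \<noteq> []"
    proof -
      have "card T \<ge> 2" using SubD(3)[OF TS] .
      then have "T \<noteq> {[]}" by auto
      then show thesis using that T0 by blast
    qed
    have sub: "{w \<in> T. adj N [] w} \<subseteq> {[a]}"
    proof
      fix w assume w: "w \<in> {w \<in> T. adj N [] w}"
      then obtain c where "w = [c]" using adj_cases(2)[of N "[]" w] by auto
      then show "w \<in> {[a]}" using hdT[of w] w by auto
    qed
    obtain w where "w \<in> T" "adj N [] w" using step_exists[OF TS T0 v(1)] v(2) by metis
    then have eqs: "{w \<in> T. adj N [] w} = {[a]}" using sub by blast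
    then have deg0: "deg N T [] = 1" by (simp add: deg_def)
    have aT: "[a] \<in> T" using eqs by blast
    have aF: "[a] \<in> FN N" using aT TF by auto
    then have al: "a \<in> letters N" by (simp add: FN_def)
    have "adj N [a] []" using aF al unfolding adj_def
      by (intro conjI bexI[of _ "-a"]) (auto simp: mult_def cons_red_def)
    then have "([a], []) \<in> terminal_edges N T" using aT T0 deg0 by (auto simp: terminal_edges_def edges_in_def)
    then obtain \<xi> where \<xi>: "\<xi> \<in> S" "\<xi> \<in> Cyl N ([a], [])" using meet by blast
    have \<xi>b: "\<xi> \<in> bdry N" using \<xi>(2) by (simp add: Cyl_def)
    have "[act_bdry [- a] \<xi> 0] = [- a]" using \<xi>(2) by (simp add: Cyl_def inv_w_def mult_def cons_red_def)
    then have c: "cons_red_inf (- a) \<xi> 0 = - a" by simp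
    have "\<xi> 0 = a" using allS[OF \<xi>(1)] .
    then have "cons_red_inf (- a) \<xi> 0 = \<xi> 1" by (simp add: cons_red_inf_def)
    moreover have "\<xi> 1 \<noteq> - \<xi> 0" using bdryD(2)[OF \<xi>b, of 0] by simp
    ultimately show False using c \<open>\<xi> 0 = a\<close> by simp
  qed
qed




lemma mult_single: "mult [b] [c] = (if b = - c then [] else [b, c])"
  by (simp add: mult_def cons_red_def)

lemma Cyl_Nil: "Cyl N ([], v) = {\<xi> \<in> bdry N. [\<xi> 0] = v}"
  by (simp add: Cyl_def)

lemma D1_SCyl:
  assumes S: "S \<in> D N 1"
  shows "\<exists>T\<in>R1 N. S \<in> SCyl N T"
proof -
  have SC: "S \<in> CN N" using S by (auto simp: D_def)
  have Sb: "S \<subseteq> bdry N" using CN_closed(2)[OF SC] .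
  obtain x y where xy: "x \<in> S" "y \<in> S" "x 0 \<noteq> y 0" using S by (auto simp: D_def)
  define T where "T = insert [] ((\<lambda>\<xi>. [\<xi> 0]) ` S)"
  have let0: "\<And>\<xi>. \<xi> \<in> S \<Longrightarrow> \<xi> 0 \<in> letters N" using Sb bdryD(1) by blast
  have Tform: "\<And>u. u \<in> T \<Longrightarrow> u = [] \<or> (\<exists>\<xi>\<in>S. u = [\<xi> 0])" unfolding T_def by auto
  have fin: "finite T"
  proof -
    have "(\<lambda>\<xi>. [\<xi> 0]) ` S \<subseteq> (\<lambda>a. [a]) ` letters N" using let0 by auto
    moreover have "finite ((\<lambda>a. [a]) ` letters N)" using finite_letters by simp
    ultimately have "finite ((\<lambda>\<xi>. [\<xi> 0]) ` S)" by (rule finite_subset)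
    then show ?thesis unfolding T_def by simp
  qed
  have TF: "T \<subseteq> FN N" unfolding T_def FN_def using let0 by auto
  have edge1: "([], [a]) \<in> edges_in N T" "([a], []) \<in> edges_in N T" if "[a] \<in> T" for a
  proof -
    have aF: "[a] \<in> FN N" using that TF by auto
    then have al: "a \<in> letters N" by (simp add: FN_def)
    have T0: "[] \<in> T" by (simp add: T_def)
    have "adj N [] [a]" using al unfolding adj_def by (auto simp: FN_def)
    moreover have "adj N [a] []" using aF al unfolding adj_def
      by (intro conjI bexI[of _ "-a"]) (auto simp: mult_def cons_red_def)
    ultimately show "([], [a]) \<in> edges_in N T" "([a], []) \<in> edges_in N T"
      using that T0 by (auto simp: edges_in_def)
  qed
  have conn: "(u, v) \<in> (edges_in N T)\<^sup>*" if "u \<in> T" "v \<in> T" for u v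
  proof -
    have "(u, []) \<in> (edges_in N T)\<^sup>*"
      using Tform[OF that(1)] edge1 that(1) by (auto intro: r_into_rtrancl)
    moreover have "([], v) \<in> (edges_in N T)\<^sup>*"
      using Tform[OF that(2)] edge1 that(2) by (auto intro: r_into_rtrancl)
    ultimately show ?thesis by simp
  qed
  have card2: "2 \<le> card T"
  proof -
    have "{[], [x 0]} \<subseteq> T" using xy unfolding T_def by auto
    then have "card {[], [x 0]} \<le> card T" using fin card_mono by blast
    then show ?thesis by simp
  qed
  have TS: "T \<in> Sub N" using fin TF card2 conn by (auto simp: Sub_def)
  have adj0: "{w \<in> T. adj N [] w} = (\<lambda>\<xi>. [\<xi> 0]) ` S"
  proof
    show "{w \<in> T. adj N [] w} \<subseteq> (\<lambda>\<xi>. [\<xi> 0]) ` S"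
    proof
      fix w assume w: "w \<in> {w \<in> T. adj N [] w}"
      then obtain c where "w = [c]" using adj_cases(2)[of N "[]" w] by auto
      then show "w \<in> (\<lambda>\<xi>. [\<xi> 0]) ` S" using w unfolding T_def by auto
    qed
    show "(\<lambda>\<xi>. [\<xi> 0]) ` S \<subseteq> {w \<in> T. adj N [] w}"
      using edge1 unfolding T_def edges_in_def by auto
  qed
  have deg0: "2 \<le> deg N T []"
  proof -
    have "{[x 0], [y 0]} \<subseteq> (\<lambda>\<xi>. [\<xi> 0]) ` S" using xy by auto
    moreover have "finite ((\<lambda>\<xi>. [\<xi> 0]) ` S)"
      using fin unfolding T_def by simp
    ultimately have "card {[x 0], [y 0]} \<le> card ((\<lambda>\<xi>. [\<xi> 0]) ` S)" by (rule card_mono[rotated])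
    then show ?thesis using xy(3) by (simp add: deg_def adj0)
  qed
  have dega: "deg N T [a] = 1" if "[a] \<in> T" for a
  proof -
    have "{w \<in> T. adj N [a] w} = {[]}"
    proof
      show "{w \<in> T. adj N [a] w} \<subseteq> {[]}"
      proof
        fix w assume w: "w \<in> {w \<in> T. adj N [a] w}"
        then obtain c where "w = (if [a] \<noteq> [] \<and> last [a] = - c then butlast [a] else [a] @ [c])"
          using adj_cases(2)[of N "[a]" w] by auto
        then have "w = [] \<or> w = [a, c]" by auto
        then show "w \<in> {[]}" using w Tform[of w] by auto
      qed
      show "{[]} \<subseteq> {w \<in> T. adj N [a] w}" using edge1[OF that] by (auto simp: edges_in_def)
    qed
    then show ?thesis by (simp add: deg_def)
  qed
  have TR: "T \<in> R1 N"
    unfolding R1_def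
  proof (intro CollectI conjI ballI impI)
    show "T \<in> Sub N" by (rule TS)
    show "[] \<in> T" by (simp add: T_def)
    show "2 \<le> deg N T []" by (rule deg0)
    fix u assume "u \<in> T" "deg N T u = 1"
    then show "dX [] u = 1" using Tform[of u] deg0 by (auto simp: dX_Nil)
  qed
  have TE: "terminal_edges N T = {([]::int list, [\<xi> 0]) | \<xi>. \<xi> \<in> S}"
  proof
    show "terminal_edges N T \<subseteq> {([]::int list, [\<xi> 0]) | \<xi>. \<xi> \<in> S}"
    proof
      fix e assume e: "e \<in> terminal_edges N T"
      then obtain p v where pv: "e = (p, v)" "p \<in> T" "v \<in> T" "adj N p v" "deg N T v = 1"
        by (auto simp: terminal_edges_def edges_in_def)
      have "v \<noteq> []" using pv(5) deg0 by auto
      then obtain \<xi> where \<xi>: "\<xi> \<in> S" "v = [\<xi> 0]" using Tform[OF pv(3)] by auto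
      have "p = []"
      proof (rule ccontr)
        assume "p \<noteq> []"
        then obtain \<zeta> where "p = [\<zeta> 0]" using Tform[OF pv(2)] by auto
        then obtain c where "v = mult [\<zeta> 0] [c]" using pv(4) by (auto simp: adj_def)
        then show False using \<xi>(2) by (simp add: mult_single split: if_splits)
      qed
      then show "e \<in> {([]::int list, [\<xi> 0]) | \<xi>. \<xi> \<in> S}" using pv(1) \<xi> by auto
    qed
    show "{([]::int list, [\<xi> 0]) | \<xi>. \<xi> \<in> S} \<subseteq> terminal_edges N T"
    proof
      fix e assume "e \<in> {([]::int list, [\<xi> 0]) | \<xi>. \<xi> \<in> S}"
      then obtain \<xi> where \<xi>: "\<xi> \<in> S" "e = ([], [\<xi> 0])" by auto
      then have "[\<xi> 0] \<in> T" unfolding T_def by auto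
      then show "e \<in> terminal_edges N T"
        using edge1 dega \<xi>(2) by (auto simp: terminal_edges_def)
    qed
  qed
  have "S \<in> SCyl N T"
    unfolding SCyl_def TE
  proof (intro CollectI conjI ballI)
    show "S \<in> CN N" by (rule SC)
    show "S \<subseteq> (\<Union>e\<in>{([]::int list, [\<xi> 0]) | \<xi>. \<xi> \<in> S}. Cyl N e)"
    proof
      fix \<xi> assume "\<xi> \<in> S"
      then have "\<xi> \<in> Cyl N ([], [\<xi> 0])" using Sb by (auto simp: Cyl_Nil)
      then show "\<xi> \<in> (\<Union>e\<in>{([]::int list, [\<xi> 0]) | \<xi>. \<xi> \<in> S}. Cyl N e)" using \<open>\<xi> \<in> S\<close> by blast
    qed
    fix e assume "e \<in> {([]::int list, [\<xi> 0]) | \<xi>. \<xi> \<in> S}"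
    then obtain \<xi> where \<xi>: "\<xi> \<in> S" "e = ([], [\<xi> 0])" by auto
    then have "\<xi> \<in> S \<inter> Cyl N e" using Sb by (auto simp: Cyl_Nil)
    then show "S \<inter> Cyl N e \<noteq> {}" by blast
  qed
  then show ?thesis using TR by blast
qed




lemma Cyl_open:
  assumes e: "set (fst e) \<subseteq> letters N"
  shows "openin (bdry_top N) (Cyl N e)"
proof -
  let ?h = "inv_w (fst e)"
  let ?m = "mult ?h (snd e)"
  define Z where "Z = {\<zeta> \<in> bdry N. [\<zeta> 0] = ?m}"
  have Zo: "openin (bdry_top N) Z"
    unfolding openin_bdry_iff
  proof (intro conjI ballI)
    show "Z \<subseteq> bdry N" by (auto simp: Z_def)
    fix \<zeta> assume "\<zeta> \<in> Z"
    then have "cylx \<zeta> 1 \<inter> bdry N \<subseteq> Z" by (auto simp: Z_def cylx_def)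
    then show "\<exists>m. cylx \<zeta> m \<inter> bdry N \<subseteq> Z" by blast
  qed
  have h: "set ?h \<subseteq> letters N" using set_inv_w[OF e] .
  have "Cyl N e = {\<xi> \<in> bdry N. act_bdry ?h \<xi> \<in> Z}"
    using act_bdry_in[OF h] by (auto simp: Cyl_def Z_def)
  then show ?thesis using act_cont[OF h Zo] by simp
qed

lemma finite_TE: "finite T \<Longrightarrow> finite (terminal_edges N T)"
proof -
  assume "finite T"
  then have "finite (T \<times> T)" by simp
  moreover have "terminal_edges N T \<subseteq> T \<times> T" by (auto simp: terminal_edges_def edges_in_def)
  ultimately show ?thesis by (rule finite_subset[rotated])
qed

lemma SCyl_borel:
  assumes T: "T \<in> Sub N"
  shows "SCyl N T \<in> sets (borel_CN N)"
proof -
  let ?E = "terminal_edges N T"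
  have fE: "finite ?E" using finite_TE[OF SubD(1)[OF T]] .
  have eF: "\<And>e. e \<in> ?E \<Longrightarrow> set (fst e) \<subseteq> letters N"
  proof -
    fix e assume "e \<in> ?E"
    then have "fst e \<in> T" by (auto simp: terminal_edges_def edges_in_def)
    then show "set (fst e) \<subseteq> letters N" using SubD(2)[OF T] FN_set by blast
  qed
  have co: "\<And>e. e \<in> ?E \<Longrightarrow> openin (bdry_top N) (Cyl N e)" using Cyl_open eF by blast
  let ?W = "\<Union>e\<in>?E. Cyl N e"
  have Wo: "openin (bdry_top N) ?W" using co by blast
  have s1: "SubS N ?W \<in> sets (borel_CN N)" by (rule SubS_borel[OF Wo])
  show ?thesis
  proof (cases "?E = {}")
    case True
    have "SCyl N T = SubS N ?W" using True by (auto simp: SCyl_def SubS_def)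
    then show ?thesis using s1 by simp
  next
    case False
    have "SCyl N T = SubS N ?W \<inter> (\<Inter>e\<in>?E. Hit N (Cyl N e))"
      using False by (auto simp: SCyl_def SubS_def Hit_def)
    moreover have "(\<Inter>e\<in>?E. Hit N (Cyl N e)) \<in> sets (borel_CN N)"
      using fE False co Hit_borel by (intro sets.finite_INT) auto
    ultimately show ?thesis using s1 by auto
  qed
qed

lemma D1_le_V:
  assumes mu: "is_SCurr N \<mu>"
  shows "emeasure \<mu> (D N 1) \<le> V N \<mu>"
proof -
  have s: "sets \<mu> = sets (borel_CN N)" using mu by (simp add: is_SCurr_def)
  have sb: "\<And>T. T \<in> R1 N \<Longrightarrow> SCyl N T \<in> sets \<mu>"
    using SCyl_borel s by (auto simp: R1_def)
  have "D N 1 \<subseteq> (\<Union>T\<in>R1 N. SCyl N T)" using D1_SCyl by blast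
  then have "emeasure \<mu> (D N 1) \<le> emeasure \<mu> (\<Union>T\<in>R1 N. SCyl N T)"
    using sb finite_R1 by (intro emeasure_mono) (auto intro!: sets.finite_UN)
  also have "\<dots> \<le> (\<Sum>T\<in>R1 N. emeasure \<mu> (SCyl N T))"
    using sb finite_R1 by (intro emeasure_subadditive_finite) auto
  finally show ?thesis by (simp add: V_def)
qed

lemma V_bound:
  assumes mu: "is_SCurr N \<mu>" and nu: "is_SCurr N \<nu>" and T: "T \<in> Sub1 N"
  shows "emeasure (\<mu> \<Otimes>\<^sub>M \<nu>) (Ipre N (SCyl N T)) \<le> V N \<mu> * V N \<nu>"
proof -
  have s1: "sets \<mu> = sets (borel_CN N)" and s2: "sets \<nu> = sets (borel_CN N)"
    using mu nu by (auto simp: is_SCurr_def)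
  have sfnu: "sigma_finite_measure \<nu>" by (rule SCurr_sigma_finite[OF nu])
  have Db: "D N 1 \<in> sets (borel_CN N)" by (rule D_borel)
  have sub: "Ipre N (SCyl N T) \<subseteq> D N 1 \<times> D N 1"
  proof
    fix p assume p: "p \<in> Ipre N (SCyl N T)"
    then have c: "fst p \<in> CN N" "snd p \<in> CN N" and I: "fst p \<inter> snd p \<in> SCyl N T"
      by (auto simp: Ipre_def)
    have "fst p \<inter> snd p \<in> D N 1" using SCyl_D1[OF T I] .
    then obtain x y i where "x \<in> fst p \<inter> snd p" "y \<in> fst p \<inter> snd p" "i < 1" "x i \<noteq> y i"
      by (auto simp: D_def)
    then have "fst p \<in> D N 1" "snd p \<in> D N 1" using c unfolding D_def by blast+
    then show "p \<in> D N 1 \<times> D N 1" by (simp add: mem_Times_iff)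
  qed
  have "emeasure (\<mu> \<Otimes>\<^sub>M \<nu>) (Ipre N (SCyl N T)) \<le> emeasure (\<mu> \<Otimes>\<^sub>M \<nu>) (D N 1 \<times> D N 1)"
    using Db s1 s2 sub by (intro emeasure_mono) auto
  also have "\<dots> = emeasure \<mu> (D N 1) * emeasure \<nu> (D N 1)"
    using sigma_finite_measure.emeasure_pair_measure_Times[OF sfnu, of "D N 1" \<mu> "D N 1"] Db s1 s2 by simp
  also have "\<dots> \<le> V N \<mu> * V N \<nu>"
    using D1_le_V[OF mu] D1_le_V[OF nu] by (intro mult_mono) auto
  finally show ?thesis .
qed




lemma lin_sigma_finite:
  assumes mu: "is_SCurr N \<mu>" and mu': "is_SCurr N \<mu>'" and s: "sets \<rho> = sets (borel_CN N)"
    and r: "\<forall>U\<in>sets (borel_CN N). emeasure \<rho> U = ennreal a * emeasure \<mu> U + ennreal b * emeasure \<mu>' U"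
  shows "sigma_finite_measure \<rho>"
proof (rule sigma_finite_D[OF s])
  fix n
  have "emeasure \<rho> (D N n) = ennreal a * emeasure \<mu> (D N n) + ennreal b * emeasure \<mu>' (D N n)"
    using r D_borel by blast
  also have "\<dots> < \<infinity>"
    using SCurr_D_fin[OF mu] SCurr_D_fin[OF mu'] by (simp add: ennreal_mult_less_top)
  finally show "emeasure \<rho> (D N n) < \<infinity>" .
qed

lemma lin_first:
  assumes mu: "is_SCurr N \<mu>" and mu': "is_SCurr N \<mu>'" and nu: "is_SCurr N \<nu>"
    and s: "sets \<rho> = sets (borel_CN N)"
    and r: "\<forall>U\<in>sets (borel_CN N). emeasure \<rho> U = ennreal a * emeasure \<mu> U + ennreal b * emeasure \<mu>' U"
    and U: "U \<in> sets (borel_CN N)"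
  shows "emeasure (Ihat N \<rho> \<nu>) U = ennreal a * emeasure (Ihat N \<mu> \<nu>) U + ennreal b * emeasure (Ihat N \<mu>' \<nu>) U"
proof -
  have s1: "sets \<mu> = sets (borel_CN N)" and s1': "sets \<mu>' = sets (borel_CN N)" and s2: "sets \<nu> = sets (borel_CN N)"
    using mu mu' nu by (auto simp: is_SCurr_def)
  interpret R: pair_sigma_finite \<rho> \<nu>
    using lin_sigma_finite[OF mu mu' s r] SCurr_sigma_finite[OF nu] by (simp add: pair_sigma_finite_def)
  interpret M: pair_sigma_finite \<mu> \<nu>
    using SCurr_sigma_finite[OF mu] SCurr_sigma_finite[OF nu] by (simp add: pair_sigma_finite_def)
  interpret M': pair_sigma_finite \<mu>' \<nu>
    using SCurr_sigma_finite[OF mu'] SCurr_sigma_finite[OF nu] by (simp add: pair_sigma_finite_def)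
  let ?A = "Ipre N U"
  have A: "?A \<in> sets (\<rho> \<Otimes>\<^sub>M \<nu>)" by (rule Ipre_meas[OF s s2 U])
  have A1: "?A \<in> sets (\<mu> \<Otimes>\<^sub>M \<nu>)" by (rule Ipre_meas[OF s1 s2 U])
  have A1': "?A \<in> sets (\<mu>' \<Otimes>\<^sub>M \<nu>)" by (rule Ipre_meas[OF s1' s2 U])
  have "emeasure (Ihat N \<rho> \<nu>) U = emeasure (\<rho> \<Otimes>\<^sub>M \<nu>) ?A" by (rule Ihat_emeasure[OF s s2 U])
  also have "\<dots> = (\<integral>\<^sup>+y. emeasure \<rho> ((\<lambda>x. (x, y)) -` ?A) \<partial>\<nu>)" by (rule R.emeasure_pair_measure_alt2[OF A])
  also have "\<dots> = (\<integral>\<^sup>+y. ennreal a * emeasure \<mu> ((\<lambda>x. (x, y)) -` ?A) + ennreal b * emeasure \<mu>' ((\<lambda>x. (x, y)) -` ?A) \<partial>\<nu>)"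
  proof (rule nn_integral_cong)
    fix y
    have "(\<lambda>x. (x, y)) -` ?A \<in> sets \<rho>" using sets_Pair2[OF A] .
    then show "emeasure \<rho> ((\<lambda>x. (x, y)) -` ?A) = ennreal a * emeasure \<mu> ((\<lambda>x. (x, y)) -` ?A) + ennreal b * emeasure \<mu>' ((\<lambda>x. (x, y)) -` ?A)"
      using r s by simp
  qed
  also have "\<dots> = ennreal a * (\<integral>\<^sup>+y. emeasure \<mu> ((\<lambda>x. (x, y)) -` ?A) \<partial>\<nu>) + ennreal b * (\<integral>\<^sup>+y. emeasure \<mu>' ((\<lambda>x. (x, y)) -` ?A) \<partial>\<nu>)"
    using M.measurable_emeasure_Pair2[OF A1] M'.measurable_emeasure_Pair2[OF A1']
    by (simp add: nn_integral_add nn_integral_cmult)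
  also have "\<dots> = ennreal a * emeasure (\<mu> \<Otimes>\<^sub>M \<nu>) ?A + ennreal b * emeasure (\<mu>' \<Otimes>\<^sub>M \<nu>) ?A"
    by (simp add: M.emeasure_pair_measure_alt2[OF A1] M'.emeasure_pair_measure_alt2[OF A1'])
  also have "\<dots> = ennreal a * emeasure (Ihat N \<mu> \<nu>) U + ennreal b * emeasure (Ihat N \<mu>' \<nu>) U"
    by (simp add: Ihat_emeasure[OF s1 s2 U] Ihat_emeasure[OF s1' s2 U])
  finally show ?thesis .
qed

lemma lin_second:
  assumes mu: "is_SCurr N \<mu>" and mu': "is_SCurr N \<mu>'" and nu: "is_SCurr N \<nu>"
    and s: "sets \<rho> = sets (borel_CN N)"
    and r: "\<forall>U\<in>sets (borel_CN N). emeasure \<rho> U = ennreal a * emeasure \<mu> U + ennreal b * emeasure \<mu>' U"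
    and U: "U \<in> sets (borel_CN N)"
  shows "emeasure (Ihat N \<nu> \<rho>) U = ennreal a * emeasure (Ihat N \<nu> \<mu>) U + ennreal b * emeasure (Ihat N \<nu> \<mu>') U"
proof -
  have s1: "sets \<mu> = sets (borel_CN N)" and s1': "sets \<mu>' = sets (borel_CN N)" and s2: "sets \<nu> = sets (borel_CN N)"
    using mu mu' nu by (auto simp: is_SCurr_def)
  interpret R: sigma_finite_measure \<rho> using lin_sigma_finite[OF mu mu' s r] .
  interpret M: sigma_finite_measure \<mu> using SCurr_sigma_finite[OF mu] .
  interpret M': sigma_finite_measure \<mu>' using SCurr_sigma_finite[OF mu'] .
  let ?A = "Ipre N U"
  have A: "?A \<in> sets (\<nu> \<Otimes>\<^sub>M \<rho>)" by (rule Ipre_meas[OF s2 s U])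
  have A1: "?A \<in> sets (\<nu> \<Otimes>\<^sub>M \<mu>)" by (rule Ipre_meas[OF s2 s1 U])
  have A1': "?A \<in> sets (\<nu> \<Otimes>\<^sub>M \<mu>')" by (rule Ipre_meas[OF s2 s1' U])
  have "emeasure (Ihat N \<nu> \<rho>) U = emeasure (\<nu> \<Otimes>\<^sub>M \<rho>) ?A" by (rule Ihat_emeasure[OF s2 s U])
  also have "\<dots> = (\<integral>\<^sup>+x. emeasure \<rho> (Pair x -` ?A) \<partial>\<nu>)" by (rule R.emeasure_pair_measure_alt[OF A])
  also have "\<dots> = (\<integral>\<^sup>+x. ennreal a * emeasure \<mu> (Pair x -` ?A) + ennreal b * emeasure \<mu>' (Pair x -` ?A) \<partial>\<nu>)"
  proof (rule nn_integral_cong)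
    fix x
    have "Pair x -` ?A \<in> sets \<rho>" using sets_Pair1[OF A] .
    then show "emeasure \<rho> (Pair x -` ?A) = ennreal a * emeasure \<mu> (Pair x -` ?A) + ennreal b * emeasure \<mu>' (Pair x -` ?A)"
      using r s by simp
  qed
  also have "\<dots> = ennreal a * (\<integral>\<^sup>+x. emeasure \<mu> (Pair x -` ?A) \<partial>\<nu>) + ennreal b * (\<integral>\<^sup>+x. emeasure \<mu>' (Pair x -` ?A) \<partial>\<nu>)"
    using M.measurable_emeasure_Pair[OF A1] M'.measurable_emeasure_Pair[OF A1']
    by (simp add: nn_integral_add nn_integral_cmult)
  also have "\<dots> = ennreal a * emeasure (\<nu> \<Otimes>\<^sub>M \<mu>) ?A + ennreal b * emeasure (\<nu> \<Otimes>\<^sub>M \<mu>') ?A"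
    by (simp add: M.emeasure_pair_measure_alt[OF A1] M'.emeasure_pair_measure_alt[OF A1'])
  also have "\<dots> = ennreal a * emeasure (Ihat N \<nu> \<mu>) U + ennreal b * emeasure (Ihat N \<nu> \<mu>') U"
    by (simp add: Ihat_emeasure[OF s2 s1 U] Ihat_emeasure[OF s2 s1' U])
  finally show ?thesis .
qed

theorem mainTheorem6:
  fixes N :: nat
  assumes "2 \<le> N"
  shows
   "(\<forall>\<mu> \<nu>. is_SCurr N \<mu> \<and> is_SCurr N \<nu> \<longrightarrow>
        (\<forall>U\<in>sets (borel_CN N). Ipre N U \<in> sets (\<mu> \<Otimes>\<^sub>M \<nu>))
      \<and> is_SCurr N (Ihat N \<mu> \<nu>)
      \<and> (\<forall>U\<in>sets (borel_CN N). emeasure (Ihat N \<mu> \<nu>) U = emeasure (\<mu> \<Otimes>\<^sub>M \<nu>) (Ipre N U))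
      \<and> (\<forall>T\<in>Sub1 N. emeasure (\<mu> \<Otimes>\<^sub>M \<nu>) (Ipre N (SCyl N T)) \<le> V N \<mu> * V N \<nu>))
    \<and> (\<forall>(a::real) (b::real) \<mu> \<mu>' \<nu> \<rho>.
        0 \<le> a \<and> 0 \<le> b \<and> is_SCurr N \<mu> \<and> is_SCurr N \<mu>' \<and> is_SCurr N \<nu>
        \<and> sets \<rho> = sets (borel_CN N)
        \<and> (\<forall>U\<in>sets (borel_CN N). emeasure \<rho> U = ennreal a * emeasure \<mu> U + ennreal b * emeasure \<mu>' U)
        \<longrightarrow> (\<forall>U\<in>sets (borel_CN N).
              emeasure (Ihat N \<rho> \<nu>) U = ennreal a * emeasure (Ihat N \<mu> \<nu>) U + ennreal b * emeasure (Ihat N \<mu>' \<nu>) U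
            \<and> emeasure (Ihat N \<nu> \<rho>) U = ennreal a * emeasure (Ihat N \<nu> \<mu>) U + ennreal b * emeasure (Ihat N \<nu> \<mu>') U))"
  proof (intro conjI allI impI ballI)
  fix \<mu> \<nu> assume H: "is_SCurr N \<mu> \<and> is_SCurr N \<nu>"
  then have mu: "is_SCurr N \<mu>" and nu: "is_SCurr N \<nu>" by auto
  have s1: "sets \<mu> = sets (borel_CN N)" and s2: "sets \<nu> = sets (borel_CN N)"
    using mu nu by (auto simp: is_SCurr_def)
  show "\<And>U. U \<in> sets (borel_CN N) \<Longrightarrow> Ipre N U \<in> sets (\<mu> \<Otimes>\<^sub>M \<nu>)" by (rule Ipre_meas[OF s1 s2])
  show "is_SCurr N (Ihat N \<mu> \<nu>)" by (rule Ihat_SCurr[OF mu nu])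
  show "\<And>U. U \<in> sets (borel_CN N) \<Longrightarrow> emeasure (Ihat N \<mu> \<nu>) U = emeasure (\<mu> \<Otimes>\<^sub>M \<nu>) (Ipre N U)"
    by (rule Ihat_emeasure[OF s1 s2])
  show "\<And>T. T \<in> Sub1 N \<Longrightarrow> emeasure (\<mu> \<Otimes>\<^sub>M \<nu>) (Ipre N (SCyl N T)) \<le> V N \<mu> * V N \<nu>"
    by (rule V_bound[OF mu nu])
next
  fix a b :: real and \<mu> \<mu>' \<nu> \<rho> U
  assume H: "0 \<le> a \<and> 0 \<le> b \<and> is_SCurr N \<mu> \<and> is_SCurr N \<mu>' \<and> is_SCurr N \<nu> \<and> sets \<rho> = sets (borel_CN N)
        \<and> (\<forall>U\<in>sets (borel_CN N). emeasure \<rho> U = ennreal a * emeasure \<mu> U + ennreal b * emeasure \<mu>' U)"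
    and U: "U \<in> sets (borel_CN N)"
  show "emeasure (Ihat N \<rho> \<nu>) U = ennreal a * emeasure (Ihat N \<mu> \<nu>) U + ennreal b * emeasure (Ihat N \<mu>' \<nu>) U"
    using lin_first[of N \<mu> \<mu>' \<nu> \<rho> a b U] H U by blast
  show "emeasure (Ihat N \<nu> \<rho>) U = ennreal a * emeasure (Ihat N \<nu> \<mu>) U + ennreal b * emeasure (Ihat N \<nu> \<mu>') U"
    using lin_second[of N \<mu> \<mu>' \<nu> \<rho> a b U] H U by blast
qed


end
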